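(* In the setting below, if the operator $K$ has a subinvariant density $f_*$ with $f_*>0$ $m$-a.e., then the minimal semigroup $\{P(t)\}_{t\ge0}$ is stochastic and $\overline f_*=\sup_{\lambda>0}R(\lambda,A)f_*$ satisfies $\overline f_*>0$ $m$-a.e.
   Context: Setting: $(E,\mathcal{E},m)$ is a $\sigma$-finite measure space, $L^1=L^1(E,\mathcal{E},m)$, $L^1_+$ its nonnegative elements, $D(m)=\{f\in L^1_+:\|f\|=1\}$ the densities. A linear operator on $L^1$ is stochastic if it maps $D(m)$ into $D(m)$, substochastic if it is a positive contraction; a (sub)stochastic semigroup is a $C_0$-semigroup of (sub)stochastic operators. A substochastic operator $Q$ is extended to nonnegative measurable $f=\sup_n f_n$ ($0\le f_n\uparrow$, $f_n\in L^1_+$) by $Qf=\sup_nQf_n$ (possibly $+\infty$); $f\ge0$ measurable is subinvariant (invariant) for $Q$ if $Qf\le f$ ($Qf=f$), and for a semigroup if this holds for each $P(t)$. Let $P$ be a stochastic operator on $L^1$, $\varphi\colon E\to[0,\infty)$ measurable, and $\{S(t)\}_{t\ge0}$ a substochastic semigroup with generator $(A,\mathcal{D}(A))$ such that $\mathcal{D}(A)\subseteq L^1_\varphi=\{f\in L^1:\int\varphi|f|\,dm<\infty\}$ and $\int_E Af\,dm=-\int_E\varphi f\,dm$ for all $f\in\mathcal{D}(A)\cap L^1_+$. $R(\lambda,A)=(\lambda-A)^{-1}=\int_0^\infty e^{-\lambda s}S(s)\,ds$ for $\lambda>0$. The minimal semigroup $\{P(t)\}_{t\ge0}$ is the substochastic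 semigroup whose generator $(\mathcal{C},\mathcal{D}(\mathcal{C}))$ is given by $R(\lambda,\mathcal{C})f=\lim_{n\to\infty}R(\lambda,A)\sum_{k=0}^n(P(\varphi R(\lambda,A)))^kf$ for $f\in L^1$, $\lambda>0$; it satisfies $\mathcal{D}(A)\subseteq\mathcal{D}(\mathcal{C})$ and $\mathcal{C}f=Af+P(\varphi f)$ for $f\in\mathcal{D}(A)$. The substochastic operator $K$ on $L^1$ is $Kf=\lim_{\lambda\downarrow0}P(\varphi R(\lambda,A))f$. *)

theory Defs
  imports "HOL-Analysis.Analysis"
begin

text \<open>Elements of L^1(E,E,m) are represented by integrable real functions; all
equalities/inequalities between them are understood m-almost everywhere.
Operators on L^1 are functions on representatives that respect a.e. equality.\<close>

definition l1 :: "'a measure \<Rightarrow> ('a \<Rightarrow> real) \<Rightarrow> bool" where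
  "l1 M f \<longleftrightarrow> integrable M f"

definition l1_dist :: "'a measure \<Rightarrow> ('a \<Rightarrow> real) \<Rightarrow> ('a \<Rightarrow> real) \<Rightarrow> real" where
  "l1_dist M f g = (\<integral>x. \<bar>f x - g x\<bar> \<partial>M)"

definition is_density :: "'a measure \<Rightarrow> ('a \<Rightarrow> real) \<Rightarrow> bool" where
  "is_density M f \<longleftrightarrow> l1 M f \<and> (AE x in M. 0 \<le> f x) \<and> (\<integral>x. f x \<partial>M) = 1"

definition l1_linear :: "'a measure \<Rightarrow> (('a \<Rightarrow> real) \<Rightarrow> ('a \<Rightarrow> real)) \<Rightarrow> bool" where
  "l1_linear M T \<longleftrightarrow>
     (\<forall>f. l1 M f \<longrightarrow> l1 M (T f)) \<and>
     (\<forall>f g. l1 M f \<and> l1 M g \<and> (AE x in M. f x = g x) \<longrightarrow> (AE x in M. T f x = T g x)) \<and>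
     (\<forall>a b f g. l1 M f \<and> l1 M g \<longrightarrow>
        (AE x in M. T (\<lambda>y. a * f y + b * g y) x = a * T f x + b * T g x))"

definition substochastic :: "'a measure \<Rightarrow> (('a \<Rightarrow> real) \<Rightarrow> ('a \<Rightarrow> real)) \<Rightarrow> bool" where
  "substochastic M T \<longleftrightarrow> l1_linear M T \<and>
     (\<forall>f. l1 M f \<and> (AE x in M. 0 \<le> f x) \<longrightarrow> (AE x in M. 0 \<le> T f x)) \<and>
     (\<forall>f. l1 M f \<longrightarrow> (\<integral>x. \<bar>T f x\<bar> \<partial>M) \<le> (\<integral>x. \<bar>f x\<bar> \<partial>M))"

definition stochastic :: "'a measure \<Rightarrow> (('a \<Rightarrow> real) \<Rightarrow> ('a \<Rightarrow> real)) \<Rightarrow> bool" where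
  "stochastic M T \<longleftrightarrow> l1_linear M T \<and> (\<forall>f. is_density M f \<longrightarrow> is_density M (T f))"

text \<open>C_0-semigroups on L^1 (only t \<ge> 0 is relevant)\<close>
definition c0_semigroup :: "'a measure \<Rightarrow> (real \<Rightarrow> ('a \<Rightarrow> real) \<Rightarrow> ('a \<Rightarrow> real)) \<Rightarrow> bool" where
  "c0_semigroup M S \<longleftrightarrow>
     (\<forall>t\<ge>0. l1_linear M (S t)) \<and>
     (\<forall>f. l1 M f \<longrightarrow> (AE x in M. S 0 f x = f x)) \<and>
     (\<forall>s t f. 0 \<le> s \<and> 0 \<le> t \<and> l1 M f \<longrightarrow> (AE x in M. S (s + t) f x = S s (S t f) x)) \<and>
     (\<forall>f. l1 M f \<longrightarrow> ((\<lambda>t. l1_dist M (S t f) f) \<longlongrightarrow> 0) (at_right 0))"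

definition substochastic_semigroup :: "'a measure \<Rightarrow> (real \<Rightarrow> ('a \<Rightarrow> real) \<Rightarrow> ('a \<Rightarrow> real)) \<Rightarrow> bool" where
  "substochastic_semigroup M S \<longleftrightarrow> c0_semigroup M S \<and> (\<forall>t\<ge>0. substochastic M (S t))"

definition stochastic_semigroup :: "'a measure \<Rightarrow> (real \<Rightarrow> ('a \<Rightarrow> real) \<Rightarrow> ('a \<Rightarrow> real)) \<Rightarrow> bool" where
  "stochastic_semigroup M S \<longleftrightarrow> c0_semigroup M S \<and> (\<forall>t\<ge>0. stochastic M (S t))"

text \<open>Graph of the generator: f \<in> D(A) and A f = g\<close>
definition generator :: "'a measure \<Rightarrow> (real \<Rightarrow> ('a \<Rightarrow> real) \<Rightarrow> ('a \<Rightarrow> real))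
    \<Rightarrow> ('a \<Rightarrow> real) \<Rightarrow> ('a \<Rightarrow> real) \<Rightarrow> bool" where
  "generator M S f g \<longleftrightarrow> l1 M f \<and> l1 M g \<and>
     ((\<lambda>t. l1_dist M (\<lambda>x. (S t f x - f x) / t) g) \<longlongrightarrow> 0) (at_right 0)"

text \<open>Resolvent R(\<lambda>,A) f = (\<lambda> - A)^{-1} f: the h \<in> D(A) with A h = \<lambda> h - f\<close>
definition resolvent :: "'a measure \<Rightarrow> (real \<Rightarrow> ('a \<Rightarrow> real) \<Rightarrow> ('a \<Rightarrow> real))
    \<Rightarrow> real \<Rightarrow> ('a \<Rightarrow> real) \<Rightarrow> ('a \<Rightarrow> real)" where
  "resolvent M S l f = (SOME h. generator M S h (\<lambda>x. l * h x - f x))"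

definition PphiR :: "'a measure \<Rightarrow> (('a \<Rightarrow> real) \<Rightarrow> ('a \<Rightarrow> real)) \<Rightarrow> ('a \<Rightarrow> real)
    \<Rightarrow> (real \<Rightarrow> ('a \<Rightarrow> real) \<Rightarrow> ('a \<Rightarrow> real)) \<Rightarrow> real \<Rightarrow> ('a \<Rightarrow> real) \<Rightarrow> ('a \<Rightarrow> real)" where
  "PphiR M P \<phi> S l f = P (\<lambda>x. \<phi> x * resolvent M S l f x)"

end

theory Submission
  imports Defs
begin

definition nrm :: "'a measure \<Rightarrow> ('a \<Rightarrow> real) \<Rightarrow> real" where
  "nrm M f = (\<integral>x. \<bar>f x\<bar> \<partial>M)"

lemma l1_dist_nrm: "l1_dist M f g = nrm M (\<lambda>x. f x - g x)"
  by (simp add: l1_dist_def nrm_def)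

lemma nrm_nonneg: "0 \<le> nrm M f"
  by (simp add: nrm_def)

lemma l1_dist_nonneg: "0 \<le> l1_dist M f g"
  by (simp add: l1_dist_def)

lemma l1_dist_commute: "l1_dist M f g = l1_dist M g f"
  unfolding l1_dist_def by (simp add: abs_minus_commute)

lemma nrm_cong_AE:
  assumes "f \<in> borel_measurable M" "g \<in> borel_measurable M" "AE x in M. f x = g x"
  shows "nrm M f = nrm M g"
  unfolding nrm_def by (rule integral_cong_AE) (use assms in auto)

lemma nrm_eq0_iff:
  assumes "integrable M f"
  shows "nrm M f = 0 \<longleftrightarrow> (AE x in M. f x = 0)"
  unfolding nrm_def using integral_nonneg_eq_0_iff_AE[of M "\<lambda>x. \<bar>f x\<bar>"] assms by auto

lemma l1_dist_eq0_iff: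
  assumes "integrable M f" "integrable M g"
  shows "l1_dist M f g = 0 \<longleftrightarrow> (AE x in M. f x = g x)"
  using nrm_eq0_iff[of M "\<lambda>x. f x - g x"] assms by (simp add: l1_dist_nrm)

lemma nrm_add_le:
  assumes "integrable M f" "integrable M g"
  shows "nrm M (\<lambda>x. f x + g x) \<le> nrm M f + nrm M g"
proof -
  have "(\<integral>x. \<bar>f x + g x\<bar> \<partial>M) \<le> (\<integral>x. \<bar>f x\<bar> + \<bar>g x\<bar> \<partial>M)"
    by (intro integral_mono) (auto intro!: integrable_abs integrable_add assms abs_triangle_ineq)
  also have "\<dots> = (\<integral>x. \<bar>f x\<bar> \<partial>M) + (\<integral>x. \<bar>g x\<bar> \<partial>M)"
    by (rule Bochner_Integration.integral_add; intro integrable_abs assms)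
  finally show ?thesis unfolding nrm_def .
qed

lemma nrm_diff_le:
  assumes "integrable M f" "integrable M g"
  shows "nrm M (\<lambda>x. f x - g x) \<le> nrm M f + nrm M g"
  using nrm_add_le[of M f "\<lambda>x. - g x"] assms by (simp add: nrm_def)

lemma nrm_cmult: "nrm M (\<lambda>x. c * f x) = \<bar>c\<bar> * nrm M f"
  unfolding nrm_def by (simp add: abs_mult)

lemma nrm_minus: "nrm M (\<lambda>x. - f x) = nrm M f"
  unfolding nrm_def by simp

lemma l1_dist_triangle:
  assumes "integrable M f" "integrable M g" "integrable M h"
  shows "l1_dist M f h \<le> l1_dist M f g + l1_dist M g h"
  using nrm_add_le[of M "\<lambda>x. f x - g x" "\<lambda>x. g x - h x"] assms by (simp add: l1_dist_nrm)

lemma l1_dist_cong_AE: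
  assumes "f \<in> borel_measurable M" "f' \<in> borel_measurable M" "g \<in> borel_measurable M"
    "AE x in M. f x = f' x"
  shows "l1_dist M f g = l1_dist M f' g"
  unfolding l1_dist_nrm by (rule nrm_cong_AE) (use assms in auto)

lemma nrm_mono_AE:
  assumes "integrable M g" "f \<in> borel_measurable M" "AE x in M. \<bar>f x\<bar> \<le> \<bar>g x\<bar>"
  shows "nrm M f \<le> nrm M g"
proof -
  have "integrable M f"
    by (rule Bochner_Integration.integrable_bound[OF assms(1) assms(2)]) (use assms(3) in simp)
  then show ?thesis unfolding nrm_def by (intro integral_mono_AE) (use assms in auto)
qed

lemma integral_le_nrm: "(\<integral>x. f x \<partial>M) \<le> nrm M f"
  unfolding nrm_def using integral_abs_bound[of M f] by (smt (verit))

lemma abs_integral_le_nrm: "\<bar>\<integral>x. f x \<partial>M\<bar> \<le> nrm M f"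
  unfolding nrm_def using integral_abs_bound[of M f] by simp

lemma l1_lim_unique:
  assumes "\<And>n. integrable M (u n)" "integrable M a" "integrable M b"
    "(\<lambda>n. l1_dist M (u n) a) \<longlonglongrightarrow> 0" "(\<lambda>n. l1_dist M (u n) b) \<longlonglongrightarrow> 0"
  shows "AE x in M. a x = b x"
proof -
  have le: "l1_dist M a b \<le> l1_dist M (u n) a + l1_dist M (u n) b" for n
    using l1_dist_triangle[of M a "u n" b] assms l1_dist_commute[of M a "u n"] by auto
  have "(\<lambda>n. l1_dist M (u n) a + l1_dist M (u n) b) \<longlonglongrightarrow> 0"
    using tendsto_add[OF assms(4,5)] by simp
  then have "l1_dist M a b \<le> 0"
    using le by (intro LIMSEQ_le_const[of _ 0]) (auto intro: exI[of _ 0])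
  then have "l1_dist M a b = 0" using l1_dist_nonneg[of M a b] by linarith
  then show ?thesis using l1_dist_eq0_iff assms by blast
qed

lemma l1_series:
  assumes int: "\<And>i. integrable M (u i)" and sm: "summable (\<lambda>i. nrm M (u i))"
  shows "integrable M (\<lambda>x. \<Sum>i. u i x)"
    and "AE x in M. summable (\<lambda>i. \<bar>u i x\<bar>)"
    and "nrm M (\<lambda>x. \<Sum>i. u i x) \<le> (\<Sum>i. nrm M (u i))"
    and "(\<lambda>n. l1_dist M (\<lambda>x. \<Sum>i<n. u i x) (\<lambda>x. \<Sum>i. u i x)) \<longlonglongrightarrow> 0"
proof -
  have [measurable]: "u i \<in> borel_measurable M" for i using int by auto
  have "(\<integral>\<^sup>+x. (\<Sum>i. ennreal \<bar>u i x\<bar>) \<partial>M) = (\<Sum>i. \<integral>\<^sup>+x. ennreal \<bar>u i x\<bar> \<partial>M)"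
    by (intro nn_integral_suminf) auto
  also have "\<dots> = (\<Sum>i. ennreal (nrm M (u i)))"
    unfolding nrm_def
    by (intro arg_cong[where f=suminf] ext nn_integral_eq_integral) (auto intro: int)
  also have "\<dots> < \<infinity>"
    using sm by (simp add: ennreal_suminf_neq_top nrm_nonneg less_top[symmetric])
  finally have "AE x in M. (\<Sum>i. ennreal \<bar>u i x\<bar>) < \<infinity>"
    by (intro finite_nn_integral_imp_ae_finite) auto
  then show AEs: "AE x in M. summable (\<lambda>i. \<bar>u i x\<bar>)"
    by eventually_elim (intro summable_suminf_not_top, auto)
  have sm': "summable (\<lambda>i. LINT x|M. norm (u i x))" using sm by (simp add: nrm_def)
  show intU: "integrable M (\<lambda>x. \<Sum>i. u i x)"
    by (rule integrable_suminf) (use int AEs sm' in auto)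
  have tail: "nrm M (\<lambda>x. \<Sum>i. u (i + n) x) \<le> (\<Sum>i. nrm M (u (i + n)))" for n
  proof -
    have AEn: "AE x in M. summable (\<lambda>i. \<bar>u (i+n) x\<bar>)"
      using AEs by eventually_elim (subst summable_iff_shift[where k=n], simp)
    have smn: "summable (\<lambda>i. nrm M (u (i + n)))" using sm by (subst summable_iff_shift[where k=n], simp)
    have i1: "integrable M (\<lambda>x. \<Sum>i. \<bar>u (i+n) x\<bar>)"
      by (rule integrable_suminf) (use int AEn smn in \<open>auto simp: nrm_def\<close>)
    have i2: "integrable M (\<lambda>x. \<Sum>i. u (i+n) x)"
      by (rule integrable_suminf) (use int AEn smn in \<open>auto simp: nrm_def\<close>)
    have "nrm M (\<lambda>x. \<Sum>i. u (i + n) x) \<le> (\<integral>x. (\<Sum>i. \<bar>u (i+n) x\<bar>) \<partial>M)"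
      unfolding nrm_def
    proof (rule integral_mono_AE)
      show "AE x in M. \<bar>\<Sum>i. u (i + n) x\<bar> \<le> (\<Sum>i. \<bar>u (i + n) x\<bar>)"
        using AEn by eventually_elim (rule summable_rabs)
    qed (use i1 i2 in auto)
    also have "\<dots> = (\<Sum>i. nrm M (u (i + n)))"
      by (subst integral_suminf) (use int AEn smn in \<open>auto simp: nrm_def\<close>)
    finally show ?thesis .
  qed
  show "nrm M (\<lambda>x. \<Sum>i. u i x) \<le> (\<Sum>i. nrm M (u i))" using tail[of 0] by simp
  have eq: "l1_dist M (\<lambda>x. \<Sum>i<n. u i x) (\<lambda>x. \<Sum>i. u i x) = nrm M (\<lambda>x. \<Sum>i. u (i + n) x)" for n
  proof -
    have "l1_dist M (\<lambda>x. \<Sum>i<n. u i x) (\<lambda>x. \<Sum>i. u i x) = nrm M (\<lambda>x. - (\<Sum>i. u (i + n) x))"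
      unfolding l1_dist_nrm
    proof (rule nrm_cong_AE)
      show "AE x in M. (\<Sum>i<n. u i x) - (\<Sum>i. u i x) = - (\<Sum>i. u (i + n) x)"
        using AEs
      proof eventually_elim
        case (elim x)
        then have "summable (\<lambda>i. u i x)" by (rule summable_rabs_cancel)
        from suminf_split_initial_segment[OF this, of n] show ?case by simp
      qed
    qed (use intU in auto)
    then show ?thesis by (simp add: nrm_minus)
  qed
  have "(\<lambda>n. \<Sum>i. nrm M (u (i + n))) \<longlonglongrightarrow> 0"
  proof -
    have "(\<lambda>n. (\<Sum>i. nrm M (u i)) - (\<Sum>i<n. nrm M (u i))) \<longlonglongrightarrow> (\<Sum>i. nrm M (u i)) - (\<Sum>i. nrm M (u i))"
      by (intro tendsto_diff tendsto_const summable_LIMSEQ sm)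
    moreover have "(\<Sum>i. nrm M (u i)) - (\<Sum>i<n. nrm M (u i)) = (\<Sum>i. nrm M (u (i + n)))" for n
      using suminf_split_initial_segment[OF sm, of n] by simp
    ultimately show ?thesis by simp
  qed
  note T = this
  show "(\<lambda>n. l1_dist M (\<lambda>x. \<Sum>i<n. u i x) (\<lambda>x. \<Sum>i. u i x)) \<longlonglongrightarrow> 0"
  proof (rule tendsto_sandwich[OF _ _ tendsto_const T])
    show "\<forall>\<^sub>F n in sequentially. 0 \<le> l1_dist M (\<lambda>x. \<Sum>i<n. u i x) (\<lambda>x. \<Sum>i. u i x)"
      by (simp add: l1_dist_nonneg)
    show "\<forall>\<^sub>F n in sequentially. l1_dist M (\<lambda>x. \<Sum>i<n. u i x) (\<lambda>x. \<Sum>i. u i x) \<le> (\<Sum>i. nrm M (u (i + n)))"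
      unfolding eq using tail by simp
  qed
qed


lemma l1_complete:
  assumes int: "\<And>n. integrable M (s n)"
    and C: "\<And>e. e > 0 \<Longrightarrow> \<exists>N. \<forall>m\<ge>N. \<forall>n\<ge>N. l1_dist M (s m) (s n) < e"
  shows "\<exists>g. integrable M g \<and> (\<lambda>n. l1_dist M (s n) g) \<longlonglongrightarrow> 0"
proof -
  define N where "N k = (SOME N. \<forall>m\<ge>N. \<forall>n\<ge>N. l1_dist M (s m) (s n) < (1/2)^k)" for k :: nat
  have N: "\<forall>m\<ge>N k. \<forall>n\<ge>N k. l1_dist M (s m) (s n) < (1/2)^k" for k
    unfolding N_def by (rule someI_ex) (rule C, simp)
  define r where "r k = (\<Sum>j\<le>k. N j) + k" for k
  have rN: "N k \<le> r k" for k unfolding r_def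
    using member_le_sum[of k "{..k}" N] by auto
  have rmono: "r k \<le> r (Suc k)" for k unfolding r_def by simp
  define u where "u k = (if k = 0 then s (r 0) else (\<lambda>x. s (r k) x - s (r (k - 1)) x))" for k
  have intu: "integrable M (u k)" for k unfolding u_def using int by auto
  have tele: "(\<Sum>i<Suc n. u i x) = s (r n) x" for n x
    by (induction n) (auto simp: u_def)
  have bnd: "nrm M (u (Suc k)) \<le> (1/2)^k" for k
  proof -
    have "nrm M (u (Suc k)) = l1_dist M (s (r (Suc k))) (s (r k))"
      by (simp add: u_def l1_dist_nrm)
    also have "\<dots> < (1/2)^k" using N[of k] rN[of k] rN[of "Suc k"] rmono[of k] by auto
    finally show ?thesis by simp
  qed
  have sm: "summable (\<lambda>i. nrm M (u i))"
  proof -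
    have "summable (\<lambda>k. nrm M (u (Suc k)))"
    proof (rule summable_comparison_test[of _ "\<lambda>k. (1/2)^k"])
      show "\<exists>N. \<forall>n\<ge>N. norm (nrm M (u (Suc n))) \<le> (1/2)^n"
        using bnd nrm_nonneg by (metis abs_of_nonneg real_norm_def)
    qed simp
    then show ?thesis by (subst summable_Suc_iff[symmetric])
  qed
  define g where "g = (\<lambda>x. \<Sum>i. u i x)"
  note ser = l1_series[OF intu sm]
  have ig: "integrable M g" using ser(1) by (simp add: g_def)
  have "(\<lambda>n. l1_dist M (\<lambda>x. \<Sum>i<Suc n. u i x) g) \<longlonglongrightarrow> 0"
    using LIMSEQ_Suc[OF ser(4)] by (simp add: g_def)
  then have sub: "(\<lambda>n. l1_dist M (s (r n)) g) \<longlonglongrightarrow> 0"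
    unfolding tele .
  have "(\<lambda>n. l1_dist M (s n) g) \<longlonglongrightarrow> 0"
  proof (rule LIMSEQ_I)
    fix e :: real assume "0 < e"
    obtain K1 where K1: "\<forall>m\<ge>K1. \<forall>n\<ge>K1. l1_dist M (s m) (s n) < e/2" using C[of "e/2"] \<open>0<e\<close> by auto
    obtain K2 where K2: "\<forall>n\<ge>K2. norm (l1_dist M (s (r n)) g) < e/2"
      using LIMSEQ_D[OF sub, of "e/2"] \<open>0<e\<close> by auto
    define k where "k = max K1 K2"
    have rk: "K1 \<le> r k" using rN[of k] unfolding r_def k_def
      by (metis le_add2 max.cobounded1 order_trans)
    show "\<exists>no. \<forall>n\<ge>no. norm (l1_dist M (s n) g - 0) < e"
    proof (intro exI allI impI)
      fix n assume "K1 \<le> n"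
      have "l1_dist M (s n) g \<le> l1_dist M (s n) (s (r k)) + l1_dist M (s (r k)) g"
        by (rule l1_dist_triangle) (use int ig in auto)
      also have "\<dots> < e/2 + e/2"
        using K1 rk \<open>K1 \<le> n\<close> K2[rule_format, of k] by (intro add_strict_mono) (auto simp: k_def)
      finally show "norm (l1_dist M (s n) g - 0) < e" using l1_dist_nonneg[of M "s n" g] by simp
    qed
  qed
  with ig show ?thesis by blast
qed


lemma lin_int: "l1_linear M T \<Longrightarrow> integrable M f \<Longrightarrow> integrable M (T f)"
  by (simp add: l1_linear_def l1_def)

lemma lin_cong: "l1_linear M T \<Longrightarrow> integrable M f \<Longrightarrow> integrable M g \<Longrightarrow> AE x in M. f x = g x
   \<Longrightarrow> AE x in M. T f x = T g x"
  by (simp add: l1_linear_def l1_def)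

lemma lin_comb: "l1_linear M T \<Longrightarrow> integrable M f \<Longrightarrow> integrable M g \<Longrightarrow>
    AE x in M. T (\<lambda>y. a * f y + b * g y) x = a * T f x + b * T g x"
  by (simp add: l1_linear_def l1_def)

lemma lin_add: assumes "l1_linear M T" "integrable M f" "integrable M g"
  shows "AE x in M. T (\<lambda>y. f y + g y) x = T f x + T g x"
  using lin_comb[OF assms, of 1 1] by simp

lemma lin_diff: assumes "l1_linear M T" "integrable M f" "integrable M g"
  shows "AE x in M. T (\<lambda>y. f y - g y) x = T f x - T g x"
  using lin_comb[OF assms, of 1 "-1"] by simp

lemma lin_cmult: assumes "l1_linear M T" "integrable M f"
  shows "AE x in M. T (\<lambda>y. c * f y) x = c * T f x"
  using lin_comb[OF assms assms(2), of c 0] by simp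

lemma lin_zero: assumes "l1_linear M T"
  shows "AE x in M. T (\<lambda>y. 0) x = 0"
  using lin_cmult[OF assms, of "\<lambda>y. 0" 0] by simp

lemma lin_sum: assumes "l1_linear M T" "finite I" "\<And>i. i \<in> I \<Longrightarrow> integrable M (f i)"
  shows "AE x in M. T (\<lambda>y. \<Sum>i\<in>I. f i y) x = (\<Sum>i\<in>I. T (f i) x)"
  using assms(2,3)
proof (induction I rule: finite_induct)
  case empty then show ?case using lin_zero[OF assms(1)] by simp
next
  case (insert a I)
  have i1: "integrable M (\<lambda>y. \<Sum>i\<in>I. f i y)" using insert by auto
  have "AE x in M. T (\<lambda>y. f a y + (\<Sum>i\<in>I. f i y)) x = T (f a) x + T (\<lambda>y. \<Sum>i\<in>I. f i y) x"
    by (rule lin_add[OF assms(1)]) (use insert i1 in auto)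
  with insert.IH insert.prems show ?case
    by (auto simp: insert.hyps elim!: eventually_elim2)
qed

lemma lin_neg: assumes "l1_linear M T" "integrable M f"
  shows "AE x in M. T (\<lambda>y. - f y) x = - T f x"
  using lin_cmult[OF assms, of "-1"] by simp

definition contr :: "'a measure \<Rightarrow> (('a \<Rightarrow> real) \<Rightarrow> ('a \<Rightarrow> real)) \<Rightarrow> bool" where
  "contr M T \<longleftrightarrow> l1_linear M T \<and> (\<forall>f. integrable M f \<longrightarrow> nrm M (T f) \<le> nrm M f)"

lemma substoch_contr: "substochastic M T \<Longrightarrow> contr M T"
  by (simp add: substochastic_def contr_def nrm_def l1_def)

lemma contr_nrm: "contr M T \<Longrightarrow> integrable M f \<Longrightarrow> nrm M (T f) \<le> nrm M f"
  by (simp add: contr_def)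

lemma contr_lin: "contr M T \<Longrightarrow> l1_linear M T"
  by (simp add: contr_def)

lemma contr_dist:
  assumes "contr M T" "integrable M f" "integrable M g"
  shows "l1_dist M (T f) (T g) \<le> l1_dist M f g"
proof -
  have L: "l1_linear M T" using assms contr_lin by auto
  have "l1_dist M (T f) (T g) = nrm M (T (\<lambda>y. f y - g y))"
    unfolding l1_dist_nrm
  proof (rule nrm_cong_AE)
    have i: "integrable M (T f)" "integrable M (T g)" "integrable M (T (\<lambda>y. f y - g y))"
      using lin_int[OF L] assms by auto
    then show "(\<lambda>x. T f x - T g x) \<in> borel_measurable M" "T (\<lambda>y. f y - g y) \<in> borel_measurable M"
      by auto
    show "AE x in M. T f x - T g x = T (\<lambda>y. f y - g y) x"
      by (rule eventually_mono[OF lin_diff[OF L assms(2,3)]]) simp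
  qed
  also have "\<dots> \<le> l1_dist M f g" unfolding l1_dist_nrm
    by (rule contr_nrm) (use assms in auto)
  finally show ?thesis .
qed

lemma contr_integral_le:
  assumes "contr M T" "integrable M f"
  shows "(\<integral>x. T f x \<partial>M) \<le> nrm M f"
  using integral_le_nrm[of M "T f"] contr_nrm[OF assms] by linarith


lemma nrm_dist_diff: 
  assumes "integrable M a" "integrable M b"
  shows "\<bar>nrm M a - nrm M b\<bar> \<le> l1_dist M a b"
proof -
  have "nrm M a \<le> nrm M b + l1_dist M a b"
    using nrm_add_le[of M b "\<lambda>x. a x - b x"] assms by (simp add: l1_dist_nrm)
  moreover have "nrm M b \<le> nrm M a + l1_dist M a b"
    using nrm_add_le[of M a "\<lambda>x. b x - a x"] assms l1_dist_commute[of M a b]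
    by (simp add: l1_dist_nrm)
  ultimately show ?thesis by linarith
qed

lemma lim_cong_seq:
  assumes "\<And>n. integrable M (a n)" "\<And>n. integrable M (b n)" "integrable M c"
    "\<And>n. AE x in M. a n x = b n x" "(\<lambda>n. l1_dist M (a n) c) \<longlonglongrightarrow> 0"
  shows "(\<lambda>n. l1_dist M (b n) c) \<longlonglongrightarrow> 0"
proof -
  have "l1_dist M (a n) c = l1_dist M (b n) c" for n
    by (rule l1_dist_cong_AE) (use assms in auto)
  then show ?thesis using assms(5) by simp
qed

lemma lim_cong_target:
  assumes "\<And>n. integrable M (a n)" "integrable M c" "integrable M c'"
    "AE x in M. c x = c' x" "(\<lambda>n. l1_dist M (a n) c) \<longlonglongrightarrow> 0"
  shows "(\<lambda>n. l1_dist M (a n) c') \<longlonglongrightarrow> 0"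
proof -
  have "l1_dist M (a n) c = l1_dist M (a n) c'" for n
    using l1_dist_cong_AE[of c M c' "a n"] assms l1_dist_commute by (metis borel_measurable_integrable)
  then show ?thesis using assms(5) by simp
qed

lemma lim_lin:
  assumes "\<And>n. integrable M (a n)" "\<And>n. integrable M (b n)" "integrable M a0" "integrable M b0"
    "(\<lambda>n. l1_dist M (a n) a0) \<longlonglongrightarrow> 0" "(\<lambda>n. l1_dist M (b n) b0) \<longlonglongrightarrow> 0"
  shows "(\<lambda>n. l1_dist M (\<lambda>x. \<alpha> * a n x + \<beta> * b n x) (\<lambda>x. \<alpha> * a0 x + \<beta> * b0 x)) \<longlonglongrightarrow> 0"
proof -
  have le: "l1_dist M (\<lambda>x. \<alpha> * a n x + \<beta> * b n x) (\<lambda>x. \<alpha> * a0 x + \<beta> * b0 x)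
      \<le> \<bar>\<alpha>\<bar> * l1_dist M (a n) a0 + \<bar>\<beta>\<bar> * l1_dist M (b n) b0" for n
  proof -
    have "l1_dist M (\<lambda>x. \<alpha> * a n x + \<beta> * b n x) (\<lambda>x. \<alpha> * a0 x + \<beta> * b0 x)
        = nrm M (\<lambda>x. \<alpha> * (a n x - a0 x) + \<beta> * (b n x - b0 x))"
      by (simp add: l1_dist_nrm algebra_simps)
    also have "\<dots> \<le> nrm M (\<lambda>x. \<alpha> * (a n x - a0 x)) + nrm M (\<lambda>x. \<beta> * (b n x - b0 x))"
      by (rule nrm_add_le) (use assms in auto)
    also have "\<dots> = \<bar>\<alpha>\<bar> * l1_dist M (a n) a0 + \<bar>\<beta>\<bar> * l1_dist M (b n) b0"
      by (simp add: nrm_cmult l1_dist_nrm)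
    finally show ?thesis .
  qed
  have "(\<lambda>n. \<bar>\<alpha>\<bar> * l1_dist M (a n) a0 + \<bar>\<beta>\<bar> * l1_dist M (b n) b0) \<longlonglongrightarrow> \<bar>\<alpha>\<bar> * 0 + \<bar>\<beta>\<bar> * 0"
    by (intro tendsto_intros assms)
  then have T: "(\<lambda>n. \<bar>\<alpha>\<bar> * l1_dist M (a n) a0 + \<bar>\<beta>\<bar> * l1_dist M (b n) b0) \<longlonglongrightarrow> 0" by simp
  show ?thesis
  proof (rule tendsto_sandwich[OF _ _ tendsto_const T])
    show "\<forall>\<^sub>F n in sequentially. 0 \<le> l1_dist M (\<lambda>x. \<alpha> * a n x + \<beta> * b n x) (\<lambda>x. \<alpha> * a0 x + \<beta> * b0 x)"
      by (simp add: l1_dist_nonneg)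
    show "\<forall>\<^sub>F n in sequentially. l1_dist M (\<lambda>x. \<alpha> * a n x + \<beta> * b n x) (\<lambda>x. \<alpha> * a0 x + \<beta> * b0 x)
       \<le> \<bar>\<alpha>\<bar> * l1_dist M (a n) a0 + \<bar>\<beta>\<bar> * l1_dist M (b n) b0"
      using le by simp
  qed
qed

lemma lim_op:
  assumes "contr M T" "\<And>n. integrable M (a n)" "integrable M a0"
    "(\<lambda>n. l1_dist M (a n) a0) \<longlonglongrightarrow> 0"
  shows "(\<lambda>n. l1_dist M (T (a n)) (T a0)) \<longlonglongrightarrow> 0"
proof (rule tendsto_sandwich[OF _ _ tendsto_const assms(4)])
  show "\<forall>\<^sub>F n in sequentially. 0 \<le> l1_dist M (T (a n)) (T a0)"
    by (simp add: l1_dist_nonneg)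
  show "\<forall>\<^sub>F n in sequentially. l1_dist M (T (a n)) (T a0) \<le> l1_dist M (a n) a0"
    using contr_dist[OF assms(1) assms(2) assms(3)] by simp
qed

locale sg =
  fixes M :: "'a measure" and S :: "real \<Rightarrow> ('a \<Rightarrow> real) \<Rightarrow> ('a \<Rightarrow> real)"
  assumes c0: "c0_semigroup M S"
    and ctr: "\<And>t. 0 \<le> t \<Longrightarrow> contr M (S t)"
begin

lemma lin: "0 \<le> t \<Longrightarrow> l1_linear M (S t)"
  using ctr contr_lin by blast

lemma Sint: "0 \<le> t \<Longrightarrow> integrable M f \<Longrightarrow> integrable M (S t f)"
  using lin lin_int by blast

lemma Snrm: "0 \<le> t \<Longrightarrow> integrable M f \<Longrightarrow> nrm M (S t f) \<le> nrm M f"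
  using ctr contr_nrm by blast

lemma S0: "integrable M f \<Longrightarrow> AE x in M. S 0 f x = f x"
  using c0 by (simp add: c0_semigroup_def l1_def)

lemma Sadd: "0 \<le> s \<Longrightarrow> 0 \<le> t \<Longrightarrow> integrable M f \<Longrightarrow> AE x in M. S (s + t) f x = S s (S t f) x"
  using c0 by (simp add: c0_semigroup_def l1_def)

lemma Scomm: "0 \<le> s \<Longrightarrow> 0 \<le> t \<Longrightarrow> integrable M f \<Longrightarrow> AE x in M. S s (S t f) x = S t (S s f) x"
proof -
  assume a: "0 \<le> s" "0 \<le> t" "integrable M f"
  have "AE x in M. S (s + t) f x = S s (S t f) x" "AE x in M. S (t + s) f x = S t (S s f) x"
    using Sadd a by auto
  then show ?thesis by eventually_elim (simp add: add.commute)
qed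

lemma Scont: "integrable M f \<Longrightarrow> ((\<lambda>t. l1_dist M (S t f) f) \<longlongrightarrow> 0) (at_right 0)"
  using c0 by (simp add: c0_semigroup_def l1_def)

lemma Scont_eps:
  assumes "integrable M f" "0 < e"
  shows "\<exists>\<eta>>0. \<forall>r. 0 \<le> r \<and> r < \<eta> \<longrightarrow> l1_dist M (S r f) f < e"
proof -
  from Scont[OF assms(1)] assms(2)
  have "eventually (\<lambda>t. dist (l1_dist M (S t f) f) 0 < e) (at_right 0)"
    by (rule tendstoD)
  then obtain \<eta> where "\<eta> > 0" and H: "\<And>t. 0 < t \<Longrightarrow> t < \<eta> \<Longrightarrow> l1_dist M (S t f) f < e"
    unfolding eventually_at_right_field by (auto simp: l1_dist_nonneg)
  have "l1_dist M (S 0 f) f = 0"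
    using S0[OF assms(1)] l1_dist_eq0_iff[OF Sint[OF order_refl assms(1)] assms(1)] by simp
  then have "\<forall>r. 0 \<le> r \<and> r < \<eta> \<longrightarrow> l1_dist M (S r f) f < e"
    using H assms(2) by (metis order_le_less)
  with \<open>\<eta> > 0\<close> show ?thesis by blast
qed

lemma Sdiff: "0 \<le> t \<Longrightarrow> integrable M f \<Longrightarrow> integrable M g \<Longrightarrow> AE x in M. S t (\<lambda>y. f y - g y) x = S t f x - S t g x"
  using lin lin_diff by blast

lemma Sdist: "0 \<le> t \<Longrightarrow> integrable M f \<Longrightarrow> integrable M g \<Longrightarrow> l1_dist M (S t f) (S t g) \<le> l1_dist M f g"
  using ctr contr_dist by blast

end


lemma geo_arith: "0 < (d::real) \<Longrightarrow> 0 < lam \<Longrightarrow> d * (1 / (1 + lam * d)) * c * (1 / (1 - 1 / (1 + lam * d))) = c / lam"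
proof -
  assume a: "0 < d" "0 < lam"
  define A where "A = lam * d"
  have A: "0 < A" using a by (simp add: A_def)
  have "1 - 1 / (1 + A) = A / (1 + A)" using A by (simp add: field_simps)
  then have e: "1 / (1 - 1 / (1 + A)) = (1 + A) / A" by simp
  have "d * (1 / (1 + A)) * c * ((1 + A) / A) = d * c / A" using A by simp
  then have "d * (1 / (1 + A)) * c * (1 / (1 - 1 / (1 + A))) = d * c / A" using e by simp
  also have "\<dots> = c / lam" using a by (simp add: A_def)
  finally show ?thesis by (simp add: A_def)
qed

context sg begin

lemma tele:
  assumes "0 \<le> \<delta>" "integrable M u" "integrable M v" "AE x in M. S \<delta> u x = u x + \<delta> * v x"
  shows "AE x in M. S (real k * \<delta>) u x - u x = \<delta> * (\<Sum>i<k. S (real i * \<delta>) v x)"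
proof (induction k)
  case 0
  show ?case using S0[OF assms(2)] by simp
next
  case (Suc k)
  have k0: "0 \<le> real k * \<delta>" using assms(1) by simp
  have e1: "AE x in M. S (real k * \<delta> + \<delta>) u x = S (real k * \<delta>) (S \<delta> u) x"
    using Sadd[OF k0 assms(1) assms(2)] .
  have e2: "AE x in M. S (real k * \<delta>) (S \<delta> u) x = S (real k * \<delta>) (\<lambda>y. u y + \<delta> * v y) x"
    by (rule lin_cong[OF lin[OF k0]]) (use Sint assms in auto)
  have e3: "AE x in M. S (real k * \<delta>) (\<lambda>y. 1 * u y + \<delta> * v y) x = 1 * S (real k * \<delta>) u x + \<delta> * S (real k * \<delta>) v x"
    by (rule lin_comb[OF lin[OF k0]]) (use assms in auto)
  have eq: "real (Suc k) * \<delta> = real k * \<delta> + \<delta>" by (simp add: algebra_simps)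
  from e1 e2 e3 Suc.IH show ?case
    unfolding eq by eventually_elim (simp add: algebra_simps)
qed

end

locale sgl = sg +
  fixes lam :: real
  assumes lam: "0 < lam"
begin

definition qd :: "real \<Rightarrow> real" where "qd \<delta> = 1 / (1 + lam * \<delta>)"

definition ud :: "real \<Rightarrow> ('a \<Rightarrow> real) \<Rightarrow> nat \<Rightarrow> 'a \<Rightarrow> real" where
  "ud \<delta> f k = (\<lambda>x. \<delta> * qd \<delta> ^ Suc k * S (real k * \<delta>) f x)"

definition Rd :: "real \<Rightarrow> ('a \<Rightarrow> real) \<Rightarrow> 'a \<Rightarrow> real" where
  "Rd \<delta> f = (\<lambda>x. \<Sum>k. ud \<delta> f k x)"

lemma qd_pos: "0 < \<delta> \<Longrightarrow> 0 < qd \<delta>" and qd_lt1: "0 < \<delta> \<Longrightarrow> qd \<delta> < 1"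
proof -
  assume "0 < \<delta>"
  then have "0 < lam * \<delta>" using lam by simp
  then show "0 < qd \<delta>" "qd \<delta> < 1" by (auto simp: qd_def)
qed

lemma geo:
  assumes "0 < \<delta>"
  shows "summable (\<lambda>k. \<delta> * qd \<delta> ^ Suc k * c)" "(\<Sum>k. \<delta> * qd \<delta> ^ Suc k * c) = c / lam"
proof -
  have q: "norm (qd \<delta>) < 1" using qd_pos[OF assms] qd_lt1[OF assms] by simp
  have eq: "(\<lambda>k. \<delta> * qd \<delta> ^ Suc k * c) = (\<lambda>k. (\<delta> * qd \<delta> * c) * qd \<delta> ^ k)"
    by (auto simp: algebra_simps)
  show "summable (\<lambda>k. \<delta> * qd \<delta> ^ Suc k * c)"
    unfolding eq by (intro summable_mult summable_geometric q)
  have "(\<Sum>k. (\<delta> * qd \<delta> * c) * qd \<delta> ^ k) = (\<delta> * qd \<delta> * c) * (1 / (1 - qd \<delta>))"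
    using suminf_mult[OF summable_geometric[OF q], of "\<delta> * qd \<delta> * c"] suminf_geometric[OF q] by simp
  also have "\<dots> = c / lam"
    using geo_arith[OF assms lam] by (simp add: qd_def)
  finally show "(\<Sum>k. \<delta> * qd \<delta> ^ Suc k * c) = c / lam" unfolding eq .
qed

lemma ud_int: "0 < \<delta> \<Longrightarrow> integrable M f \<Longrightarrow> integrable M (ud \<delta> f k)"
  unfolding ud_def using Sint[of "real k * \<delta>" f] by auto

lemma ud_nrm: "0 < \<delta> \<Longrightarrow> integrable M f \<Longrightarrow> nrm M (ud \<delta> f k) \<le> \<delta> * qd \<delta> ^ Suc k * nrm M f"
proof -
  assume a: "0 < \<delta>" "integrable M f"
  have "nrm M (ud \<delta> f k) = \<delta> * qd \<delta> ^ Suc k * nrm M (S (real k * \<delta>) f)"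
    unfolding ud_def using nrm_cmult[of M "\<delta> * qd \<delta> ^ Suc k" "S (real k * \<delta>) f"] qd_pos[OF a(1)] a(1)
    by (simp add: mult.assoc)
  also have "\<dots> \<le> \<delta> * qd \<delta> ^ Suc k * nrm M f"
    using Snrm[of "real k * \<delta>" f] a qd_pos[OF a(1)] by (intro mult_left_mono) auto
  finally show ?thesis .
qed

lemma ud_summable:
  assumes "0 < \<delta>" "integrable M f"
  shows "summable (\<lambda>k. nrm M (ud \<delta> f k))" "(\<Sum>k. nrm M (ud \<delta> f k)) \<le> nrm M f / lam"
proof -
  show s: "summable (\<lambda>k. nrm M (ud \<delta> f k))"
    by (rule summable_comparison_test[OF _ geo(1)[OF assms(1), of "nrm M f"]])
       (use ud_nrm[OF assms] in \<open>auto intro!: exI[of _ 0] simp: abs_of_nonneg[OF nrm_nonneg]\<close>)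
  have "(\<Sum>k. nrm M (ud \<delta> f k)) \<le> (\<Sum>k. \<delta> * qd \<delta> ^ Suc k * nrm M f)"
    by (rule suminf_le[OF _ s geo(1)[OF assms(1)]]) (use ud_nrm[OF assms] in auto)
  then show "(\<Sum>k. nrm M (ud \<delta> f k)) \<le> nrm M f / lam" using geo(2)[OF assms(1)] by simp
qed

lemma Rd:
  assumes "0 < \<delta>" "integrable M f"
  shows Rd_int: "integrable M (Rd \<delta> f)"
    and Rd_nrm: "nrm M (Rd \<delta> f) \<le> nrm M f / lam"
    and Rd_lim: "(\<lambda>n. l1_dist M (\<lambda>x. \<Sum>k<n. ud \<delta> f k x) (Rd \<delta> f)) \<longlonglongrightarrow> 0"
    and Rd_AE: "AE x in M. summable (\<lambda>k. \<bar>ud \<delta> f k x\<bar>)"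
proof -
  note L = l1_series[OF ud_int[OF assms] ud_summable(1)[OF assms]]
  show "integrable M (Rd \<delta> f)" using L(1) by (simp add: Rd_def)
  show "nrm M (Rd \<delta> f) \<le> nrm M f / lam" using L(3) ud_summable(2)[OF assms] by (simp add: Rd_def)
  show "(\<lambda>n. l1_dist M (\<lambda>x. \<Sum>k<n. ud \<delta> f k x) (Rd \<delta> f)) \<longlonglongrightarrow> 0" using L(4) by (simp add: Rd_def)
  show "AE x in M. summable (\<lambda>k. \<bar>ud \<delta> f k x\<bar>)" using L(2) .
qed

lemma Rd_comb:
  assumes "0 < \<delta>" "integrable M f" "integrable M g"
  shows "AE x in M. Rd \<delta> (\<lambda>y. a * f y + b * g y) x = a * Rd \<delta> f x + b * Rd \<delta> g x"
proof -
  have d0: "0 \<le> real k * \<delta>" for k using assms by simp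
  have "AE x in M. \<forall>k. S (real k * \<delta>) (\<lambda>y. a * f y + b * g y) x = a * S (real k * \<delta>) f x + b * S (real k * \<delta>) g x"
    unfolding AE_all_countable using lin_comb[OF lin[OF d0] assms(2,3)] by blast
  with Rd_AE[OF assms(1,2)] Rd_AE[OF assms(1,3)]
  show ?thesis
  proof eventually_elim
    case (elim x)
    have sf: "summable (\<lambda>k. ud \<delta> f k x)" using elim(1) by (rule summable_rabs_cancel)
    have sg: "summable (\<lambda>k. ud \<delta> g k x)" using elim(2) by (rule summable_rabs_cancel)
    have "(\<lambda>k. ud \<delta> (\<lambda>y. a * f y + b * g y) k x) = (\<lambda>k. a * ud \<delta> f k x + b * ud \<delta> g k x)"
      using elim(3) by (auto simp: ud_def algebra_simps)
    then have "Rd \<delta> (\<lambda>y. a * f y + b * g y) x = (\<Sum>k. a * ud \<delta> f k x + b * ud \<delta> g k x)"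
      by (simp add: Rd_def)
    also have "\<dots> = (\<Sum>k. a * ud \<delta> f k x) + (\<Sum>k. b * ud \<delta> g k x)"
      by (intro suminf_add[symmetric] summable_mult sf sg)
    also have "\<dots> = a * Rd \<delta> f x + b * Rd \<delta> g x"
      by (simp add: Rd_def suminf_mult sf sg)
    finally show ?case .
  qed
qed

lemma Rd_cong:
  assumes "0 < \<delta>" "integrable M f" "integrable M g" "AE x in M. f x = g x"
  shows "AE x in M. Rd \<delta> f x = Rd \<delta> g x"
proof -
  have d0: "0 \<le> real k * \<delta>" for k using assms by simp
  have "AE x in M. \<forall>k. S (real k * \<delta>) f x = S (real k * \<delta>) g x"
    unfolding AE_all_countable using lin_cong[OF lin[OF d0] assms(2,3,4)] by blast
  then show ?thesis by eventually_elim (simp add: Rd_def ud_def)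
qed

lemma Rd_comm:
  assumes "0 < \<delta>" "0 \<le> s" "integrable M f"
  shows "AE x in M. S s (Rd \<delta> f) x = Rd \<delta> (S s f) x"
proof -
  have d0: "0 \<le> real k * \<delta>" for k using assms by simp
  have isf: "integrable M (S s f)" using Sint assms by auto
  define P where "P n = (\<lambda>x. \<Sum>k<n. ud \<delta> f k x)" for n
  define Q where "Q n = (\<lambda>x. \<Sum>k<n. ud \<delta> (S s f) k x)" for n
  have iP: "integrable M (P n)" for n unfolding P_def using ud_int[OF assms(1,3)] by auto
  have iQ: "integrable M (Q n)" for n unfolding Q_def using ud_int[OF assms(1) isf] by auto
  have iSP: "integrable M (S s (P n))" for n using Sint[OF assms(2) iP] .
  have l1: "(\<lambda>n. l1_dist M (S s (P n)) (S s (Rd \<delta> f))) \<longlonglongrightarrow> 0"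
    by (rule lim_op[OF ctr[OF assms(2)] iP Rd_int[OF assms(1,3)]]) (use Rd_lim[OF assms(1,3)] in \<open>simp add: P_def\<close>)
  have eqn: "AE x in M. S s (P n) x = Q n x" for n
  proof -
    have a1: "AE x in M. S s (P n) x = (\<Sum>k<n. S s (ud \<delta> f k) x)"
      unfolding P_def by (rule lin_sum[OF lin[OF assms(2)]]) (use ud_int[OF assms(1,3)] in auto)
    have a2: "AE x in M. \<forall>k. S s (ud \<delta> f k) x = \<delta> * qd \<delta> ^ Suc k * S s (S (real k * \<delta>) f) x"
      unfolding AE_all_countable ud_def
      using lin_cmult[OF lin[OF assms(2)] Sint[OF d0 assms(3)]] by blast
    have a3: "AE x in M. \<forall>k. S s (S (real k * \<delta>) f) x = S (real k * \<delta>) (S s f) x"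
      unfolding AE_all_countable using Scomm[OF assms(2) d0 assms(3)] by blast
    from a1 a2 a3 show ?thesis by eventually_elim (simp add: Q_def ud_def)
  qed
  have eqn': "AE x in M. Q n x = S s (P n) x" for n
    by (rule eventually_mono[OF eqn[of n]]) simp
  have l2: "(\<lambda>n. l1_dist M (S s (P n)) (Rd \<delta> (S s f))) \<longlonglongrightarrow> 0"
    by (rule lim_cong_seq[OF iQ iSP Rd_int[OF assms(1) isf] eqn'])
       (use Rd_lim[OF assms(1) isf] in \<open>simp add: Q_def\<close>)
  show ?thesis
    by (rule l1_lim_unique[OF iSP Sint[OF assms(2) Rd_int[OF assms(1,3)]] Rd_int[OF assms(1) isf] l1 l2])
qed


lemma Rd_exact:
  assumes "0 < \<delta>" "integrable M f"
  shows "AE x in M. S \<delta> (Rd \<delta> f) x = Rd \<delta> f x + \<delta> * (lam * Rd \<delta> f x - f x)"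
proof -
  have d0: "0 \<le> real k * \<delta>" for k using assms by simp
  have dd: "0 \<le> \<delta>" using assms by simp
  define q where "q = qd \<delta>"
  have q0: "0 < q" using qd_pos[OF assms(1)] by (simp add: q_def)
  define P where "P n = (\<lambda>x. \<Sum>k<n. ud \<delta> f k x)" for n
  have iP: "integrable M (P n)" for n unfolding P_def using ud_int[OF assms] by auto
  have iSP: "integrable M (S \<delta> (P n))" for n using Sint[OF dd iP] .
  have iRd: "integrable M (Rd \<delta> f)" using Rd_int[OF assms] .
  have iS0: "integrable M (S 0 f)" using Sint[OF order_refl assms(2)] .
  define W where "W n = (\<lambda>x. (1/q) * P (Suc n) x + (- \<delta>) * S 0 f x)" for n
  have iW: "integrable M (W n)" for n unfolding W_def using iP iS0 by auto
  have l1: "(\<lambda>n. l1_dist M (S \<delta> (P n)) (S \<delta> (Rd \<delta> f))) \<longlonglongrightarrow> 0"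
    by (rule lim_op[OF ctr[OF dd] iP iRd]) (use Rd_lim[OF assms] in \<open>simp add: P_def\<close>)
  have eqn: "AE x in M. W n x = S \<delta> (P n) x" for n
  proof -
    have a1: "AE x in M. S \<delta> (P n) x = (\<Sum>k<n. S \<delta> (ud \<delta> f k) x)"
      unfolding P_def by (rule lin_sum[OF lin[OF dd]]) (use ud_int[OF assms] in auto)
    have a2: "AE x in M. \<forall>k. S \<delta> (ud \<delta> f k) x = \<delta> * q ^ Suc k * S \<delta> (S (real k * \<delta>) f) x"
      unfolding AE_all_countable ud_def q_def
      using lin_cmult[OF lin[OF dd] Sint[OF d0 assms(2)]] by blast
    have a3: "AE x in M. \<forall>k. S \<delta> (S (real k * \<delta>) f) x = S (real (Suc k) * \<delta>) f x"
    proof -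
      have "AE x in M. S \<delta> (S (real k * \<delta>) f) x = S (real (Suc k) * \<delta>) f x" for k
      proof -
        have e: "real (Suc k) * \<delta> = \<delta> + real k * \<delta>" by (simp add: algebra_simps)
        show ?thesis unfolding e by (rule eventually_mono[OF Sadd[OF dd d0[of k] assms(2)]]) simp
      qed
      then show ?thesis unfolding AE_all_countable by blast
    qed
    have pw: "W n x = (\<Sum>k<n. \<delta> * q ^ Suc k * S (real (Suc k) * \<delta>) f x)" for x
    proof -
      have "P (Suc n) x = \<delta> * q * S 0 f x + (\<Sum>k<n. q * (\<delta> * q ^ Suc k * S (real (Suc k) * \<delta>) f x))"
        unfolding P_def ud_def q_def[symmetric] by (subst sum.lessThan_Suc_shift) (simp add: algebra_simps)
      also have "\<dots> = \<delta> * q * S 0 f x + q * (\<Sum>k<n. \<delta> * q ^ Suc k * S (real (Suc k) * \<delta>) f x)"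
        by (simp add: sum_distrib_left)
      finally show ?thesis using q0 unfolding W_def by (simp add: field_simps)
    qed
    from a1 a2 a3 show ?thesis by eventually_elim (simp add: pw)
  qed
  have l2: "(\<lambda>n. l1_dist M (W n) (\<lambda>x. (1/q) * Rd \<delta> f x + (- \<delta>) * S 0 f x)) \<longlonglongrightarrow> 0"
    unfolding W_def
  proof (rule lim_lin[OF iP _ iRd iS0])
    show "(\<lambda>n. l1_dist M (P (Suc n)) (Rd \<delta> f)) \<longlonglongrightarrow> 0"
      using LIMSEQ_Suc[OF Rd_lim[OF assms]] by (simp add: P_def)
    show "(\<lambda>n. l1_dist M (S 0 f) (S 0 f)) \<longlonglongrightarrow> 0" by (simp add: l1_dist_def)
  qed (rule iS0)
  have l2': "(\<lambda>n. l1_dist M (S \<delta> (P n)) (\<lambda>x. (1/q) * Rd \<delta> f x + (- \<delta>) * S 0 f x)) \<longlonglongrightarrow> 0"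
    by (rule lim_cong_seq[OF iW iSP _ eqn l2]) (use iRd iS0 in auto)
  have "AE x in M. S \<delta> (Rd \<delta> f) x = (1/q) * Rd \<delta> f x + (- \<delta>) * S 0 f x"
    by (rule l1_lim_unique[OF iSP _ _ l1 l2']) (use Sint[OF dd iRd] iRd iS0 in auto)
  with S0[OF assms(2)] show ?thesis
    by eventually_elim (simp add: q_def qd_def algebra_simps)
qed

end


lemma nrm_sum_le:
  assumes "finite I" "\<And>i. i \<in> I \<Longrightarrow> integrable M (f i)"
  shows "nrm M (\<lambda>x. \<Sum>i\<in>I. f i x) \<le> (\<Sum>i\<in>I. nrm M (f i))"
  using assms
proof (induction I rule: finite_induct)
  case empty then show ?case by (simp add: nrm_def)
next
  case (insert a I)
  have "nrm M (\<lambda>x. \<Sum>i\<in>insert a I. f i x) = nrm M (\<lambda>x. f a x + (\<Sum>i\<in>I. f i x))"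
    using insert.hyps by simp
  also have "\<dots> \<le> nrm M (f a) + nrm M (\<lambda>x. \<Sum>i\<in>I. f i x)"
    by (rule nrm_add_le) (use insert.prems in auto)
  also have "\<dots> \<le> nrm M (f a) + (\<Sum>i\<in>I. nrm M (f i))"
    using insert by auto
  finally show ?case using insert.hyps by simp
qed

lemma dissip:
  assumes "contr M T" "0 < \<delta>" "0 < lam" "integrable M x"
  shows "lam * nrm M x \<le> nrm M (\<lambda>y. lam * x y - (T x y - x y) / \<delta>)"
proof -
  have iT: "integrable M (T x)" using assms contr_lin lin_int by blast
  have eq: "(\<lambda>y. (lam + 1/\<delta>) * x y) = (\<lambda>y. (lam * x y - (T x y - x y) / \<delta>) + (1/\<delta>) * T x y)"
    using assms(2) by (auto simp: field_simps)
  have "(lam + 1/\<delta>) * nrm M x = nrm M (\<lambda>y. (lam + 1/\<delta>) * x y)"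
    using assms by (simp add: nrm_cmult)
  also have "\<dots> \<le> nrm M (\<lambda>y. lam * x y - (T x y - x y) / \<delta>) + nrm M (\<lambda>y. (1/\<delta>) * T x y)"
    unfolding eq by (rule nrm_add_le) (use iT assms in auto)
  also have "nrm M (\<lambda>y. (1/\<delta>) * T x y) \<le> (1/\<delta>) * nrm M x"
  proof -
    have e1: "nrm M (\<lambda>y. (1/\<delta>) * T x y) = \<bar>1/\<delta>\<bar> * nrm M (T x)" by (rule nrm_cmult)
    have e2: "\<bar>1/\<delta>\<bar> * nrm M (T x) \<le> \<bar>1/\<delta>\<bar> * nrm M x"
      by (rule mult_left_mono[OF contr_nrm[OF assms(1,4)]]) simp
    have e3: "\<bar>1/\<delta>\<bar> = 1/\<delta>" using assms(2) by simp
    show ?thesis using e1 e2 unfolding e3 by linarith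
  qed
  finally show ?thesis using assms(2) by (simp add: algebra_simps)
qed

context sgl begin

lemma main_est:
  assumes d: "0 < \<delta>" and N: "1 \<le> N" and f: "integrable M f"
    and eps: "\<And>r. 0 \<le> r \<Longrightarrow> r \<le> \<delta> \<Longrightarrow> l1_dist M (S r f) f \<le> e"
  shows "l1_dist M (Rd \<delta> f) (Rd (\<delta> / real N) f) \<le> 2 * e / lam"
proof -
  define d' where "d' = \<delta> / real N"
  have d': "0 < d'" using d N by (simp add: d'_def)
  have Nd: "real N * d' = \<delta>" using N by (simp add: d'_def)
  define h where "h = Rd \<delta> f"
  define h' where "h' = Rd d' f"
  have ih: "integrable M h" unfolding h_def using Rd_int[OF d f] .
  have ih': "integrable M h'" unfolding h'_def using Rd_int[OF d' f] .
  define y where "y = (\<lambda>x. lam * h' x + (-1) * f x)"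
  have iy: "integrable M y" unfolding y_def using ih' f by auto
  define x where "x = (\<lambda>z. h z - h' z)"
  have ix: "integrable M x" unfolding x_def using ih ih' by auto
  have dd: "0 \<le> \<delta>" "0 \<le> d'" using d d' by auto
  have iSr: "integrable M (S r g)" if "0 \<le> r" "integrable M g" for r g using Sint that .
  have E5: "nrm M (\<lambda>z. S r y z - y z) \<le> 2 * e" if r: "0 \<le> r" "r \<le> \<delta>" for r
  proof -
    define g where "g = (\<lambda>z. 1 * S r f z + (-1) * f z)"
    have ig: "integrable M g" unfolding g_def using iSr[OF r(1) f] f by auto
    have a1: "AE z in M. S r y z = lam * S r h' z + (-1) * S r f z"
      unfolding y_def by (rule lin_comb[OF lin[OF r(1)] ih' f])
    have a2: "AE z in M. S r h' z = Rd d' (S r f) z"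
      unfolding h'_def by (rule Rd_comm[OF d' r(1) f])
    have a3: "AE z in M. Rd d' g z = 1 * Rd d' (S r f) z + (-1) * Rd d' f z"
      unfolding g_def by (rule Rd_comb[OF d' iSr[OF r(1) f] f])
    have "nrm M (\<lambda>z. S r y z - y z) = nrm M (\<lambda>z. lam * Rd d' g z + (-1) * g z)"
    proof (rule nrm_cong_AE)
      show "(\<lambda>z. S r y z - y z) \<in> borel_measurable M" using iSr[OF r(1) iy] iy by auto
      show "(\<lambda>z. lam * Rd d' g z + (-1) * g z) \<in> borel_measurable M" using Rd_int[OF d' ig] ig by auto
      from a1 a2 a3 show "AE z in M. S r y z - y z = lam * Rd d' g z + (-1) * g z"
      proof eventually_elim
        case (elim z)
        have "y z = lam * h' z - f z" by (simp add: y_def)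
        moreover have "g z = S r f z - f z" by (simp add: g_def)
        moreover have "h' z = Rd d' f z" by (simp add: h'_def)
        moreover have "S r y z = lam * Rd d' (S r f) z - S r f z" using elim(1) elim(2) by simp
        moreover have "lam * Rd d' g z = lam * Rd d' (S r f) z - lam * Rd d' f z"
        proof -
          have "Rd d' g z = Rd d' (S r f) z - Rd d' f z" using elim(3) by simp
          then show ?thesis by (simp add: right_diff_distrib)
        qed
        ultimately show ?case by (simp add: algebra_simps)
      qed
    qed
    also have "\<dots> \<le> nrm M (\<lambda>z. lam * Rd d' g z) + nrm M (\<lambda>z. (-1) * g z)"
      by (rule nrm_add_le) (use Rd_int[OF d' ig] ig in auto)
    also have "\<dots> \<le> 2 * nrm M g"
    proof -
      have "nrm M (\<lambda>z. lam * Rd d' g z) = lam * nrm M (Rd d' g)" using lam by (simp add: nrm_cmult)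
      also have "\<dots> \<le> lam * (nrm M g / lam)" using Rd_nrm[OF d' ig] lam by (intro mult_left_mono) auto
      also have "\<dots> = nrm M g" using lam by simp
      finally show ?thesis using nrm_minus[of M g] by simp
    qed
    also have "nrm M g = l1_dist M (S r f) f" by (simp add: g_def l1_dist_nrm)
    also have "\<dots> \<le> e" using eps r by auto
    finally show ?thesis by simp
  qed
  have E1: "AE z in M. S \<delta> h z = h z + \<delta> * (lam * h z - f z)"
    unfolding h_def by (rule Rd_exact[OF d f])
  have E2: "AE z in M. S d' h' z = h' z + d' * y z"
    using Rd_exact[OF d' f] unfolding h'_def y_def by simp
  have E3: "AE z in M. S (real N * d') h' z - h' z = d' * (\<Sum>i<N. S (real i * d') y z)"
    by (rule tele[OF dd(2) ih' iy E2])
  have E4: "AE z in M. S \<delta> x z = S \<delta> h z - S \<delta> h' z"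
    unfolding x_def by (rule Sdiff[OF dd(1) ih ih'])
  define F where "F = (\<lambda>i z. (1 / real N) * (S (real i * d') y z - y z))"
  have iF: "integrable M (F i)" for i unfolding F_def using iSr[OF _ iy, of "real i * d'"] dd iy by auto
  have "nrm M (\<lambda>z. lam * x z - (S \<delta> x z - x z) / \<delta>) = nrm M (\<lambda>z. \<Sum>i<N. F i z)"
  proof (rule nrm_cong_AE)
    show "(\<lambda>z. lam * x z - (S \<delta> x z - x z) / \<delta>) \<in> borel_measurable M"
      using iSr[OF dd(1) ix] ix by auto
    show "(\<lambda>z. \<Sum>i<N. F i z) \<in> borel_measurable M" using iF by auto
    from E1 E3 E4 show "AE z in M. lam * x z - (S \<delta> x z - x z) / \<delta> = (\<Sum>i<N. F i z)"
    proof eventually_elim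
      case (elim z)
      have s1: "(\<Sum>i<N. F i z) = (1 / real N) * (\<Sum>i<N. S (real i * d') y z) - y z"
      proof -
        have "(\<Sum>i<N. F i z) = (1 / real N) * (\<Sum>i<N. (S (real i * d') y z - y z))"
          unfolding F_def sum_distrib_left[symmetric] ..
        also have "(\<Sum>i<N. (S (real i * d') y z - y z)) = (\<Sum>i<N. S (real i * d') y z) - real N * y z"
          by (simp add: sum_subtractf)
        also have "(1 / real N) * ((\<Sum>i<N. S (real i * d') y z) - real N * y z)
            = (1 / real N) * (\<Sum>i<N. S (real i * d') y z) - y z"
          using N by (simp add: right_diff_distrib)
        finally show ?thesis .
      qed
      have "lam * x z - (S \<delta> x z - x z) / \<delta> = lam * x z - (\<delta> * (lam * h z - f z) - (S \<delta> h' z - h' z)) / \<delta>"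
        using elim by (simp add: x_def)
      also have "\<dots> = lam * x z - (lam * h z - f z) + (S \<delta> h' z - h' z) / \<delta>"
        using d by (simp add: diff_divide_distrib)
      also have "(S \<delta> h' z - h' z) / \<delta> = (1 / real N) * (\<Sum>i<N. S (real i * d') y z)"
        using elim(2) Nd d N by (simp add: d'_def)
      finally show ?case unfolding s1 by (simp add: x_def y_def algebra_simps)
    qed
  qed
  also have "\<dots> \<le> (\<Sum>i<N. nrm M (F i))"
    by (rule nrm_sum_le) (use iF in auto)
  also have "\<dots> \<le> (\<Sum>i<N. (1 / real N) * (2 * e))"
  proof (rule sum_mono)
    fix i assume "i \<in> {..<N}"
    then have r: "0 \<le> real i * d'" "real i * d' \<le> \<delta>"
      using d' Nd by (auto intro!: mult_right_mono simp flip: Nd)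
    show "nrm M (F i) \<le> (1 / real N) * (2 * e)"
      unfolding F_def nrm_cmult using E5[OF r] N by (simp add: divide_right_mono)
  qed
  also have "\<dots> = 2 * e" using N by simp
  finally have "lam * nrm M x \<le> 2 * e"
    using dissip[OF ctr[OF dd(1)] d lam ix] by linarith
  then show ?thesis
    using lam by (simp add: x_def h_def h'_def d'_def l1_dist_nrm field_simps)
qed

end


context sgl begin

definition hs :: "('a \<Rightarrow> real) \<Rightarrow> nat \<Rightarrow> 'a \<Rightarrow> real" where
  "hs f n = Rd (1 / 2 ^ n) f"

lemma hs_int: "integrable M f \<Longrightarrow> integrable M (hs f n)"
  unfolding hs_def by (rule Rd_int) auto

lemma hs_cauchy_step:
  assumes f: "integrable M f" and "n \<le> m"
    and eps: "\<And>r. 0 \<le> r \<Longrightarrow> r \<le> 1 / 2 ^ n \<Longrightarrow> l1_dist M (S r f) f \<le> e"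
  shows "l1_dist M (hs f n) (hs f m) \<le> 2 * e / lam"
proof -
  have eq: "(1 / 2 ^ n) / real ((2::nat) ^ (m - n)) = (1 / 2 ^ m :: real)"
  proof -
    have "(2::real) ^ n * 2 ^ (m - n) = 2 ^ m" using \<open>n \<le> m\<close> by (simp flip: power_add)
    then show ?thesis by (simp add: field_simps)
  qed
  have "l1_dist M (Rd (1 / 2 ^ n) f) (Rd ((1 / 2 ^ n) / real ((2::nat) ^ (m - n))) f) \<le> 2 * e / lam"
    by (rule main_est) (use f eps in auto)
  then show ?thesis unfolding eq hs_def .
qed

lemma hs_conv:
  assumes f: "integrable M f"
  shows "\<exists>h. integrable M h \<and> (\<lambda>n. l1_dist M (hs f n) h) \<longlonglongrightarrow> 0"
proof (rule l1_complete)
  show "integrable M (hs f n)" for n using hs_int[OF f] .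
  fix e :: real assume e: "0 < e"
  define e' where "e' = e * lam / 8"
  have e': "0 < e'" using e lam by (simp add: e'_def)
  obtain \<eta> where \<eta>: "\<eta> > 0" "\<And>r. 0 \<le> r \<and> r < \<eta> \<Longrightarrow> l1_dist M (S r f) f < e'"
    using Scont_eps[OF f e'] by auto
  obtain n0 where n0: "1 / 2 ^ n0 < \<eta>"
    using real_arch_pow_inv[of \<eta> "1/2"] \<eta>(1) by (auto simp: power_one_over)
  have step: "l1_dist M (hs f n0) (hs f m) \<le> e / 4" if "n0 \<le> m" for m
  proof -
    have "l1_dist M (hs f n0) (hs f m) \<le> 2 * e' / lam"
    proof (rule hs_cauchy_step[OF f that])
      fix r :: real assume "0 \<le> r" "r \<le> 1 / 2 ^ n0"
      then show "l1_dist M (S r f) f \<le> e'" using \<eta>(2)[of r] n0 by auto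
    qed
    also have "\<dots> = e / 4" using lam by (simp add: e'_def)
    finally show ?thesis .
  qed
  show "\<exists>N. \<forall>m\<ge>N. \<forall>n\<ge>N. l1_dist M (hs f m) (hs f n) < e"
  proof (intro exI allI impI)
    fix m n assume "n0 \<le> m" "n0 \<le> n"
    have "l1_dist M (hs f m) (hs f n) \<le> l1_dist M (hs f m) (hs f n0) + l1_dist M (hs f n0) (hs f n)"
      by (rule l1_dist_triangle) (use hs_int[OF f] in auto)
    also have "\<dots> \<le> e / 4 + e / 4"
      using step[OF \<open>n0 \<le> m\<close>] step[OF \<open>n0 \<le> n\<close>] l1_dist_commute[of M "hs f m" "hs f n0"] by simp
    also have "\<dots> < e" using e by simp
    finally show "l1_dist M (hs f m) (hs f n) < e" .
  qed
qed


lemma gen_step: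
  assumes f: "integrable M f" and h: "integrable M h" and t: "0 \<le> t"
    and g_def: "g = (\<lambda>x. lam * h x - f x)"
    and eps: "\<And>r. 0 \<le> r \<Longrightarrow> r \<le> t \<Longrightarrow> l1_dist M (S r g) g \<le> e"
    and kT: "real k * (1 / 2 ^ n) \<le> t"
  shows "nrm M (\<lambda>x. S (real k * (1 / 2 ^ n)) (hs f n) x - hs f n x - (real k * (1 / 2 ^ n)) * g x)
     \<le> (real k * (1 / 2 ^ n)) * (lam * l1_dist M (hs f n) h + e)"
proof -
  define \<delta> :: real where "\<delta> = 1 / 2 ^ n"
  have d: "0 < \<delta>" "0 \<le> \<delta>" by (auto simp: \<delta>_def)
  define u where "u = hs f n"
  have iu: "integrable M u" unfolding u_def using hs_int[OF f] .
  define v where "v = (\<lambda>x. lam * u x - f x)"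
  have iv: "integrable M v" unfolding v_def using iu f by auto
  have ig: "integrable M g" unfolding g_def using h f by auto
  have ex: "AE x in M. S \<delta> u x = u x + \<delta> * v x"
    unfolding u_def v_def hs_def \<delta>_def by (rule Rd_exact) (use f in auto)
  have tl: "AE x in M. S (real k * \<delta>) u x - u x = \<delta> * (\<Sum>i<k. S (real i * \<delta>) v x)"
    by (rule tele[OF d(2) iu iv ex])
  define D where "D i = (\<lambda>x. S (real i * \<delta>) v x - g x)" for i
  have i0: "0 \<le> real i * \<delta>" for i using d by simp
  have iD: "integrable M (D i)" for i unfolding D_def using Sint[OF i0 iv] ig by auto
  have bD: "nrm M (D i) \<le> lam * l1_dist M u h + e" if "i < k" for i
  proof -
    have ile: "real i * \<delta> \<le> t"
      using kT that d by (simp add: \<delta>_def) (smt (verit) divide_right_mono of_nat_less_iff zero_le_power)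
    define w where "w = (\<lambda>x. v x - g x)"
    have iw: "integrable M w" unfolding w_def using iv ig by auto
    have a: "AE x in M. S (real i * \<delta>) w x = S (real i * \<delta>) v x - S (real i * \<delta>) g x"
      unfolding w_def by (rule Sdiff[OF i0 iv ig])
    have "nrm M (D i) = nrm M (\<lambda>x. S (real i * \<delta>) w x + (S (real i * \<delta>) g x - g x))"
    proof (rule nrm_cong_AE)
      show "D i \<in> borel_measurable M" using iD by auto
      show "(\<lambda>x. S (real i * \<delta>) w x + (S (real i * \<delta>) g x - g x)) \<in> borel_measurable M"
        using Sint[OF i0 iw] Sint[OF i0 ig] ig by auto
      show "AE x in M. D i x = S (real i * \<delta>) w x + (S (real i * \<delta>) g x - g x)"
        using a by eventually_elim (simp add: D_def)
    qed
    also have "\<dots> \<le> nrm M (S (real i * \<delta>) w) + nrm M (\<lambda>x. S (real i * \<delta>) g x - g x)"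
      by (rule nrm_add_le) (use Sint[OF i0 iw] Sint[OF i0 ig] ig in auto)
    also have "\<dots> \<le> nrm M w + e"
    proof (rule add_mono)
      show "nrm M (S (real i * \<delta>) w) \<le> nrm M w" using Snrm[OF i0 iw] .
      show "nrm M (\<lambda>x. S (real i * \<delta>) g x - g x) \<le> e"
        using eps[OF i0 ile] by (simp add: l1_dist_nrm)
    qed
    also have "nrm M w = lam * l1_dist M u h"
    proof -
      have "w = (\<lambda>x. lam * (u x - h x))" unfolding w_def v_def g_def by (auto simp: algebra_simps)
      then show ?thesis using lam by (simp add: nrm_cmult l1_dist_nrm)
    qed
    finally show ?thesis .
  qed
  have "nrm M (\<lambda>x. S (real k * \<delta>) u x - u x - (real k * \<delta>) * g x) = nrm M (\<lambda>x. \<delta> * (\<Sum>i<k. D i x))"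
  proof (rule nrm_cong_AE)
    show "(\<lambda>x. S (real k * \<delta>) u x - u x - (real k * \<delta>) * g x) \<in> borel_measurable M"
      using Sint[OF i0 iu] iu ig by auto
    show "(\<lambda>x. \<delta> * (\<Sum>i<k. D i x)) \<in> borel_measurable M" using iD by auto
    show "AE x in M. S (real k * \<delta>) u x - u x - (real k * \<delta>) * g x = \<delta> * (\<Sum>i<k. D i x)"
      using tl by eventually_elim (simp add: D_def sum_subtractf algebra_simps)
  qed
  also have "\<dots> = \<delta> * nrm M (\<lambda>x. \<Sum>i<k. D i x)" using d by (simp add: nrm_cmult)
  also have "\<dots> \<le> \<delta> * (\<Sum>i<k. nrm M (D i))"
    by (rule mult_left_mono[OF nrm_sum_le]) (use iD d in auto)
  also have "\<dots> \<le> \<delta> * (\<Sum>i<k. lam * l1_dist M u h + e)"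
    by (rule mult_left_mono[OF sum_mono]) (use bD d in auto)
  also have "\<dots> = (real k * \<delta>) * (lam * l1_dist M u h + e)" by simp
  finally show ?thesis by (simp add: u_def \<delta>_def)
qed


lemma floor_facts:
  assumes "0 \<le> (t::real)"
  shows "real (nat \<lfloor>t * 2 ^ n\<rfloor>) * (1 / 2 ^ n) \<le> t"
    and "t - real (nat \<lfloor>t * 2 ^ n\<rfloor>) * (1 / 2 ^ n) < 1 / 2 ^ n"
    and "0 \<le> real (nat \<lfloor>t * 2 ^ n\<rfloor>) * (1 / 2 ^ n)"
proof -
  have p: "(0::real) < 2 ^ n" by simp
  have nn: "0 \<le> \<lfloor>t * 2 ^ n\<rfloor>" using assms by simp
  have e: "real (nat \<lfloor>t * 2 ^ n\<rfloor>) = real_of_int \<lfloor>t * 2 ^ n\<rfloor>" using nn by simp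
  have f1: "real_of_int \<lfloor>t * 2 ^ n\<rfloor> \<le> t * 2 ^ n" by (rule of_int_floor_le)
  have f2: "t * 2 ^ n < real_of_int \<lfloor>t * 2 ^ n\<rfloor> + 1" by (rule real_of_int_floor_add_one_gt)
  show "real (nat \<lfloor>t * 2 ^ n\<rfloor>) * (1 / 2 ^ n) \<le> t"
    unfolding e using f1 p by (simp add: field_simps)
  show "t - real (nat \<lfloor>t * 2 ^ n\<rfloor>) * (1 / 2 ^ n) < 1 / 2 ^ n"
  proof -
    have "t - real_of_int \<lfloor>t * 2 ^ n\<rfloor> * (1 / 2 ^ n) = (t * 2 ^ n - real_of_int \<lfloor>t * 2 ^ n\<rfloor>) / 2 ^ n"
      using p by (simp add: field_simps)
    also have "\<dots> < 1 / 2 ^ n" using f2 p by (intro divide_strict_right_mono) linarith+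
    finally show ?thesis unfolding e .
  qed
  show "0 \<le> real (nat \<lfloor>t * 2 ^ n\<rfloor>) * (1 / 2 ^ n)" by simp
qed

lemma resolvent_exists:
  assumes f: "integrable M f"
  shows "\<exists>h. generator M S h (\<lambda>x. lam * h x - f x)"
proof -
  obtain h where h: "integrable M h" and hc: "(\<lambda>n. l1_dist M (hs f n) h) \<longlonglongrightarrow> 0"
    using hs_conv[OF f] by auto
  define g where "g = (\<lambda>x. lam * h x - f x)"
  have ig: "integrable M g" unfolding g_def using h f by auto
  have key: "nrm M (\<lambda>x. S t h x - h x - t * g x) \<le> t * e"
    if e: "0 < e" and t: "0 \<le> t" and eps: "\<And>r. 0 \<le> r \<Longrightarrow> r \<le> t \<Longrightarrow> l1_dist M (S r g) g \<le> e" for t e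
  proof -
    define T where "T n = real (nat \<lfloor>t * 2 ^ n\<rfloor>) * (1 / 2 ^ n)" for n :: nat
    have Tt: "T n \<le> t" "t - T n < 1 / 2 ^ n" "0 \<le> T n" for n
      unfolding T_def using floor_facts[OF t] by auto
    define X where "X = nrm M (\<lambda>x. S t h x - h x - t * g x)"
    define c where "c n = T n * (lam * l1_dist M (hs f n) h + e) + 2 * l1_dist M (hs f n) h
       + l1_dist M (S (t - T n) h) h + (t - T n) * nrm M g" for n
    have bound: "X \<le> c n" for n
    proof -
      have tn: "0 \<le> t - T n" using Tt by simp
      have ihn: "integrable M (hs f n)" using hs_int[OF f] .
      have A: "nrm M (\<lambda>x. S (T n) (hs f n) x - hs f n x - T n * g x) \<le> T n * (lam * l1_dist M (hs f n) h + e)"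
        unfolding T_def
        by (rule gen_step[OF f h t g_def eps]) (use Tt[of n] in \<open>auto simp: T_def\<close>)
      have e1: "AE x in M. S (T n + (t - T n)) h x = S (T n) (S (t - T n) h) x"
        by (rule Sadd[OF Tt(3) tn h])
      have i1: "integrable M (S t h)" "integrable M (S (T n) (hs f n))" "integrable M (S (T n) h)"
        "integrable M (S (t - T n) h)" "integrable M (S (T n) (S (t - T n) h))"
        using Sint Tt(3) tn h ihn t by auto
      have d1: "l1_dist M (S t h) (S (T n) (hs f n)) \<le> l1_dist M (S (t - T n) h) h + l1_dist M h (hs f n)"
      proof -
        have "l1_dist M (S t h) (S (T n) (hs f n)) = l1_dist M (S (T n) (S (t - T n) h)) (S (T n) (hs f n))"
          by (rule l1_dist_cong_AE) (use i1 e1 in auto)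
        also have "\<dots> \<le> l1_dist M (S (T n) (S (t - T n) h)) (S (T n) h) + l1_dist M (S (T n) h) (S (T n) (hs f n))"
          by (rule l1_dist_triangle) (use i1 in auto)
        also have "\<dots> \<le> l1_dist M (S (t - T n) h) h + l1_dist M h (hs f n)"
          by (intro add_mono Sdist) (use Tt(3) i1 h ihn in auto)
        finally show ?thesis .
      qed
      have "X \<le> nrm M (\<lambda>x. S (T n) (hs f n) x - hs f n x - T n * g x)
         + nrm M (\<lambda>x. (S t h x - S (T n) (hs f n) x) - (h x - hs f n x) - (t - T n) * g x)"
      proof -
        have "X = nrm M (\<lambda>x. (S (T n) (hs f n) x - hs f n x - T n * g x)
           + ((S t h x - S (T n) (hs f n) x) - (h x - hs f n x) - (t - T n) * g x))"
          unfolding X_def by (simp add: algebra_simps)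
        also have "\<dots> \<le> nrm M (\<lambda>x. S (T n) (hs f n) x - hs f n x - T n * g x)
         + nrm M (\<lambda>x. (S t h x - S (T n) (hs f n) x) - (h x - hs f n x) - (t - T n) * g x)"
          by (rule nrm_add_le) (use i1 ihn h ig in auto)
        finally show ?thesis .
      qed
      also have "nrm M (\<lambda>x. (S t h x - S (T n) (hs f n) x) - (h x - hs f n x) - (t - T n) * g x)
          \<le> l1_dist M (S t h) (S (T n) (hs f n)) + l1_dist M h (hs f n) + (t - T n) * nrm M g"
      proof -
        have "nrm M (\<lambda>x. (S t h x - S (T n) (hs f n) x) - (h x - hs f n x) - (t - T n) * g x)
          \<le> nrm M (\<lambda>x. (S t h x - S (T n) (hs f n) x) - (h x - hs f n x)) + nrm M (\<lambda>x. (t - T n) * g x)"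
          by (rule nrm_diff_le) (use i1 ihn h ig in auto)
        also have "nrm M (\<lambda>x. (S t h x - S (T n) (hs f n) x) - (h x - hs f n x))
          \<le> l1_dist M (S t h) (S (T n) (hs f n)) + l1_dist M h (hs f n)"
          unfolding l1_dist_nrm by (rule nrm_diff_le) (use i1 ihn h in auto)
        also have "nrm M (\<lambda>x. (t - T n) * g x) = (t - T n) * nrm M g"
          using tn by (simp add: nrm_cmult)
        finally show ?thesis by simp
      qed
      finally show ?thesis
        using A d1 l1_dist_commute[of M h "hs f n"] unfolding c_def by linarith
    qed
    have Tlim: "(\<lambda>n. t - T n) \<longlonglongrightarrow> 0"
    proof (rule tendsto_sandwich[OF _ _ tendsto_const])
      show "\<forall>\<^sub>F n in sequentially. 0 \<le> t - T n" using Tt by simp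
      show "\<forall>\<^sub>F n in sequentially. t - T n \<le> (1/2) ^ n" using Tt by (simp add: less_imp_le power_one_over)
      show "(\<lambda>n. (1/2::real) ^ n) \<longlonglongrightarrow> 0" by (rule LIMSEQ_realpow_zero) auto
    qed
    have Slim: "(\<lambda>n. l1_dist M (S (t - T n) h) h) \<longlonglongrightarrow> 0"
    proof (rule LIMSEQ_I)
      fix r :: real assume "0 < r"
      obtain \<eta> where \<eta>: "\<eta> > 0" "\<And>s. 0 \<le> s \<and> s < \<eta> \<Longrightarrow> l1_dist M (S s h) h < r"
        using Scont_eps[OF h \<open>0 < r\<close>] by auto
      obtain N where "\<forall>n\<ge>N. norm (t - T n - 0) < \<eta>" using LIMSEQ_D[OF Tlim \<eta>(1)] by auto
      then show "\<exists>N. \<forall>n\<ge>N. norm (l1_dist M (S (t - T n) h) h - 0) < r"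
        using \<eta>(2) Tt l1_dist_nonneg by (metis abs_of_nonneg diff_ge_0_iff_ge diff_zero real_norm_def)
    qed
    have "c \<longlonglongrightarrow> t * (lam * 0 + e) + 2 * 0 + 0 + 0 * nrm M g"
      unfolding c_def
    proof (intro tendsto_intros hc Slim Tlim)
      show "(\<lambda>n. T n) \<longlonglongrightarrow> t" using tendsto_diff[OF tendsto_const[of t] Tlim] by simp
    qed
    then have "c \<longlonglongrightarrow> t * e" by simp
    then show ?thesis using bound unfolding X_def by (intro LIMSEQ_le_const) auto
  qed
  have "((\<lambda>t. l1_dist M (\<lambda>x. (S t h x - h x) / t) g) \<longlongrightarrow> 0) (at_right 0)"
  proof (rule tendstoI)
    fix e :: real assume e: "0 < e"
    obtain \<eta> where \<eta>: "\<eta> > 0" "\<And>r. 0 \<le> r \<and> r < \<eta> \<Longrightarrow> l1_dist M (S r g) g < e / 2"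
      using Scont_eps[OF ig, of "e/2"] e by auto
    show "\<forall>\<^sub>F t in at_right 0. dist (l1_dist M (\<lambda>x. (S t h x - h x) / t) g) 0 < e"
      unfolding eventually_at_right_field
    proof (intro exI[of _ \<eta>] conjI allI impI)
      show "0 < \<eta>" by fact
      fix t :: real assume t: "0 < t" "t < \<eta>"
      have k: "nrm M (\<lambda>x. S t h x - h x - t * g x) \<le> t * (e/2)"
        by (rule key) (use e t \<eta>(2) in \<open>auto intro: less_imp_le\<close>)
      have "l1_dist M (\<lambda>x. (S t h x - h x) / t) g = nrm M (\<lambda>x. (1/t) * (S t h x - h x - t * g x))"
        unfolding l1_dist_nrm using t by (simp add: field_simps)
      also have "\<dots> = (1/t) * nrm M (\<lambda>x. S t h x - h x - t * g x)"
        using t nrm_cmult[of M "1/t" "\<lambda>x. S t h x - h x - t * g x"] by simp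
      also have "\<dots> \<le> (1/t) * (t * (e/2))" by (rule mult_left_mono[OF k]) (use t in simp)
      also have "\<dots> < e" using t e by simp
      finally show "dist (l1_dist M (\<lambda>x. (S t h x - h x) / t) g) 0 < e"
        using l1_dist_nonneg[of M "\<lambda>x. (S t h x - h x) / t" g] by simp
    qed
  qed
  then have "generator M S h g" unfolding generator_def l1_def using h ig by simp
  then show ?thesis unfolding g_def by blast
qed

end


context sg begin

lemma gen_int: "generator M S h k \<Longrightarrow> integrable M h" "generator M S h k \<Longrightarrow> integrable M k"
  by (auto simp: generator_def l1_def)

lemma gen_lim: "generator M S h k \<Longrightarrow> ((\<lambda>t. l1_dist M (\<lambda>x. (S t h x - h x) / t) k) \<longlongrightarrow> 0) (at_right 0)"
  by (auto simp: generator_def)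

lemma gen_cong:
  assumes "generator M S h k" "integrable M k'" "AE x in M. k x = k' x"
  shows "generator M S h k'"
proof -
  have ih: "integrable M h" "integrable M k" using gen_int assms by auto
  have "eventually (\<lambda>t. l1_dist M (\<lambda>x. (S t h x - h x) / t) k = l1_dist M (\<lambda>x. (S t h x - h x) / t) k') (at_right 0)"
    unfolding eventually_at_right_field
  proof (intro exI[of _ 1] conjI allI impI)
    fix t :: real assume t: "0 < t" "t < 1"
    have "integrable M (S t h)" using Sint t ih by auto
    then have m: "(\<lambda>x. (S t h x - h x) / t) \<in> borel_measurable M" using ih by auto
    have "l1_dist M k (\<lambda>x. (S t h x - h x) / t) = l1_dist M k' (\<lambda>x. (S t h x - h x) / t)"
      by (rule l1_dist_cong_AE) (use ih assms m in auto)
    then show "l1_dist M (\<lambda>x. (S t h x - h x) / t) k = l1_dist M (\<lambda>x. (S t h x - h x) / t) k'"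
      by (simp add: l1_dist_commute)
  qed simp
  then have "((\<lambda>t. l1_dist M (\<lambda>x. (S t h x - h x) / t) k') \<longlongrightarrow> 0) (at_right 0)"
    using gen_lim[OF assms(1)] by (rule Lim_transform_eventually[rotated])
  then show ?thesis using assms ih unfolding generator_def l1_def by auto
qed

lemma gen_comb:
  assumes gu: "generator M S u a" and gv: "generator M S v b"
  shows "generator M S (\<lambda>x. \<alpha> * u x + \<beta> * v x) (\<lambda>x. \<alpha> * a x + \<beta> * b x)"
proof -
  have i: "integrable M u" "integrable M a" "integrable M v" "integrable M b"
    using gen_int gu gv by auto
  have le: "eventually (\<lambda>t. l1_dist M (\<lambda>x. (S t (\<lambda>x. \<alpha> * u x + \<beta> * v x) x - (\<alpha> * u x + \<beta> * v x)) / t) (\<lambda>x. \<alpha> * a x + \<beta> * b x)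
      \<le> \<bar>\<alpha>\<bar> * l1_dist M (\<lambda>x. (S t u x - u x) / t) a + \<bar>\<beta>\<bar> * l1_dist M (\<lambda>x. (S t v x - v x) / t) b) (at_right 0)"
    unfolding eventually_at_right_field
  proof (intro exI[of _ 1] conjI allI impI)
    fix t :: real assume t: "0 < t" "t < 1"
    have iS: "integrable M (S t u)" "integrable M (S t v)" "integrable M (S t (\<lambda>x. \<alpha> * u x + \<beta> * v x))"
      using Sint t i by auto
    have ae: "AE x in M. S t (\<lambda>x. \<alpha> * u x + \<beta> * v x) x = \<alpha> * S t u x + \<beta> * S t v x"
      using lin_comb[OF lin i(1) i(3)] t by auto
    have "l1_dist M (\<lambda>x. (S t (\<lambda>x. \<alpha> * u x + \<beta> * v x) x - (\<alpha> * u x + \<beta> * v x)) / t) (\<lambda>x. \<alpha> * a x + \<beta> * b x)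
       = nrm M (\<lambda>x. \<alpha> * ((S t u x - u x) / t - a x) + \<beta> * ((S t v x - v x) / t - b x))"
      unfolding l1_dist_nrm
    proof (rule nrm_cong_AE)
      show "AE x in M. (S t (\<lambda>x. \<alpha> * u x + \<beta> * v x) x - (\<alpha> * u x + \<beta> * v x)) / t - (\<alpha> * a x + \<beta> * b x)
          = \<alpha> * ((S t u x - u x) / t - a x) + \<beta> * ((S t v x - v x) / t - b x)"
        using ae
      proof eventually_elim
        case (elim x)
        have "(\<alpha> * S t u x + \<beta> * S t v x - (\<alpha> * u x + \<beta> * v x)) / t
           = \<alpha> * ((S t u x - u x) / t) + \<beta> * ((S t v x - v x) / t)"
          by (simp add: add_divide_distrib[symmetric] diff_divide_distrib[symmetric] algebra_simps)
        then show ?case using elim by (simp add: algebra_simps)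
      qed
    qed (use iS i in auto)
    also have "\<dots> \<le> nrm M (\<lambda>x. \<alpha> * ((S t u x - u x) / t - a x)) + nrm M (\<lambda>x. \<beta> * ((S t v x - v x) / t - b x))"
      by (rule nrm_add_le) (use iS i in auto)
    also have "\<dots> = \<bar>\<alpha>\<bar> * l1_dist M (\<lambda>x. (S t u x - u x) / t) a + \<bar>\<beta>\<bar> * l1_dist M (\<lambda>x. (S t v x - v x) / t) b"
      by (simp add: nrm_cmult l1_dist_nrm)
    finally show "l1_dist M (\<lambda>x. (S t (\<lambda>x. \<alpha> * u x + \<beta> * v x) x - (\<alpha> * u x + \<beta> * v x)) / t) (\<lambda>x. \<alpha> * a x + \<beta> * b x)
      \<le> \<bar>\<alpha>\<bar> * l1_dist M (\<lambda>x. (S t u x - u x) / t) a + \<bar>\<beta>\<bar> * l1_dist M (\<lambda>x. (S t v x - v x) / t) b" .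
  qed simp
  have T: "((\<lambda>t. \<bar>\<alpha>\<bar> * l1_dist M (\<lambda>x. (S t u x - u x) / t) a + \<bar>\<beta>\<bar> * l1_dist M (\<lambda>x. (S t v x - v x) / t) b) \<longlongrightarrow> 0) (at_right 0)"
    using tendsto_add[OF tendsto_mult[OF tendsto_const gen_lim[OF gu]] tendsto_mult[OF tendsto_const gen_lim[OF gv]]]
    by simp
  have "((\<lambda>t. l1_dist M (\<lambda>x. (S t (\<lambda>x. \<alpha> * u x + \<beta> * v x) x - (\<alpha> * u x + \<beta> * v x)) / t) (\<lambda>x. \<alpha> * a x + \<beta> * b x)) \<longlongrightarrow> 0) (at_right 0)"
    by (rule tendsto_sandwich[OF _ le tendsto_const T]) (simp add: l1_dist_nonneg)
  then show ?thesis using i unfolding generator_def l1_def by auto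
qed

lemma gen_psi_lim:
  assumes g: "generator M S h k" and psi: "\<psi> \<in> borel_measurable M" "\<And>x. \<bar>\<psi> x\<bar> \<le> 1"
  shows "((\<lambda>t. \<integral>x. \<psi> x * ((S t h x - h x) / t) \<partial>M) \<longlongrightarrow> (\<integral>x. \<psi> x * k x \<partial>M)) (at_right 0)"
proof -
  have i: "integrable M h" "integrable M k" using gen_int g by auto
  have ipsi: "integrable M (\<lambda>x. \<psi> x * w x)" if "integrable M w" for w
    by (rule Bochner_Integration.integrable_bound[OF that]) (use psi that in \<open>auto simp: abs_mult intro!: AE_I2 mult_left_le_one_le\<close>)
  have le: "eventually (\<lambda>t. dist (\<integral>x. \<psi> x * ((S t h x - h x) / t) \<partial>M) (\<integral>x. \<psi> x * k x \<partial>M)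
      \<le> l1_dist M (\<lambda>x. (S t h x - h x) / t) k) (at_right 0)"
    unfolding eventually_at_right_field
  proof (intro exI[of _ 1] conjI allI impI)
    fix t :: real assume t: "0 < t" "t < 1"
    have iq: "integrable M (\<lambda>x. (S t h x - h x) / t)" using Sint t i by auto
    have "(\<integral>x. \<psi> x * ((S t h x - h x) / t) \<partial>M) - (\<integral>x. \<psi> x * k x \<partial>M)
        = (\<integral>x. \<psi> x * ((S t h x - h x) / t - k x) \<partial>M)"
    proof -
      have i1: "integrable M (\<lambda>x. \<psi> x * ((S t h x - h x) / t))" by (rule ipsi[OF iq])
      have i2: "integrable M (\<lambda>x. \<psi> x * k x)" by (rule ipsi[OF i(2)])
      have "(\<integral>x. \<psi> x * ((S t h x - h x) / t) \<partial>M) - (\<integral>x. \<psi> x * k x \<partial>M)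
          = (\<integral>x. \<psi> x * ((S t h x - h x) / t) - \<psi> x * k x \<partial>M)"
        by (rule Bochner_Integration.integral_diff[OF i1 i2, symmetric])
      then show ?thesis by (simp add: right_diff_distrib)
    qed
    also have "\<bar>\<dots>\<bar> \<le> nrm M (\<lambda>x. \<psi> x * ((S t h x - h x) / t - k x))" by (rule abs_integral_le_nrm)
    also have "\<dots> \<le> l1_dist M (\<lambda>x. (S t h x - h x) / t) k"
      unfolding l1_dist_nrm
      by (rule nrm_mono_AE) (use iq i psi in \<open>auto simp: abs_mult intro!: mult_left_le_one_le\<close>)
    finally show "dist (\<integral>x. \<psi> x * ((S t h x - h x) / t) \<partial>M) (\<integral>x. \<psi> x * k x \<partial>M)
      \<le> l1_dist M (\<lambda>x. (S t h x - h x) / t) k" by (simp add: dist_real_def)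
  qed simp
  show ?thesis
    by (rule tendsto_dist_iff[THEN iffD2], rule tendsto_sandwich[OF _ le tendsto_const gen_lim[OF g]]) simp
qed

end


context sg begin

lemma gen_zero:
  assumes lam: "0 < lam" and g: "generator M S d (\<lambda>x. lam * d x)"
  shows "AE x in M. d x = 0"
proof -
  have id: "integrable M d" using gen_int g by auto
  define \<psi> where "\<psi> = (\<lambda>x. sgn (d x))"
  have psi: "\<psi> \<in> borel_measurable M" "\<And>x. \<bar>\<psi> x\<bar> \<le> 1"
    using id by (auto simp: \<psi>_def abs_sgn_eq)
  note L = gen_psi_lim[OF g psi]
  have "eventually (\<lambda>t. (\<integral>x. \<psi> x * ((S t d x - d x) / t) \<partial>M) \<le> 0) (at_right 0)"
    unfolding eventually_at_right_field
  proof (intro exI[of _ 1] conjI allI impI)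
    fix t :: real assume t: "0 < t" "t < 1"
    have iS: "integrable M (S t d)" using Sint t id by auto
    have b: "\<And>w. integrable M w \<Longrightarrow> integrable M (\<lambda>x. \<psi> x * w x)"
      by (rule Bochner_Integration.integrable_bound) (use psi in \<open>auto simp: abs_mult intro!: AE_I2 mult_left_le_one_le\<close>)
    have "(\<integral>x. \<psi> x * ((S t d x - d x) / t) \<partial>M) = (1/t) * ((\<integral>x. \<psi> x * S t d x \<partial>M) - (\<integral>x. \<psi> x * d x \<partial>M))"
    proof -
      have "(\<integral>x. \<psi> x * ((S t d x - d x) / t) \<partial>M) = (\<integral>x. (1/t) * (\<psi> x * S t d x - \<psi> x * d x) \<partial>M)"
        by (simp add: algebra_simps diff_divide_distrib)
      also have "\<dots> = (1/t) * (\<integral>x. \<psi> x * S t d x - \<psi> x * d x \<partial>M)" by simp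
      also have "(\<integral>x. \<psi> x * S t d x - \<psi> x * d x \<partial>M) = (\<integral>x. \<psi> x * S t d x \<partial>M) - (\<integral>x. \<psi> x * d x \<partial>M)"
        by (rule Bochner_Integration.integral_diff[OF b[OF iS] b[OF id]])
      finally show ?thesis .
    qed
    also have "\<dots> \<le> 0"
    proof -
      have "(\<integral>x. \<psi> x * S t d x \<partial>M) \<le> nrm M (\<lambda>x. \<psi> x * S t d x)" by (rule integral_le_nrm)
      also have "\<dots> \<le> nrm M (S t d)"
        by (rule nrm_mono_AE[OF iS]) (use psi iS in \<open>auto simp: abs_mult intro!: AE_I2 mult_left_le_one_le\<close>)
      also have "\<dots> \<le> nrm M d" using Snrm t id by auto
      also have "\<dots> = (\<integral>x. \<psi> x * d x \<partial>M)" unfolding nrm_def \<psi>_def by (simp add: abs_sgn mult.commute)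
      finally show ?thesis using t by (simp add: divide_nonpos_pos)
    qed
    finally show "(\<integral>x. \<psi> x * ((S t d x - d x) / t) \<partial>M) \<le> 0" .
  qed simp
  then have "(\<integral>x. \<psi> x * (lam * d x) \<partial>M) \<le> 0"
    using tendsto_upperbound[OF L] by simp
  moreover have "(\<integral>x. \<psi> x * (lam * d x) \<partial>M) = lam * nrm M d"
    unfolding nrm_def \<psi>_def by (simp add: abs_sgn mult.commute mult.left_commute)
  ultimately have "nrm M d \<le> 0" using lam by (simp add: mult_le_0_iff)
  then have "nrm M d = 0" using nrm_nonneg[of M d] by simp
  then show ?thesis using nrm_eq0_iff[OF id] by simp
qed

lemma gen_unique:
  assumes lam: "0 < lam" and f: "integrable M f"
    and g1: "generator M S h1 (\<lambda>x. lam * h1 x - f x)" and g2: "generator M S h2 (\<lambda>x. lam * h2 x - f x)"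
  shows "AE x in M. h1 x = h2 x"
proof -
  have i: "integrable M h1" "integrable M h2" using gen_int g1 g2 by auto
  have "generator M S (\<lambda>x. 1 * h1 x + (-1) * h2 x) (\<lambda>x. 1 * (lam * h1 x - f x) + (-1) * (lam * h2 x - f x))"
    by (rule gen_comb[OF g1 g2])
  then have "generator M S (\<lambda>x. 1 * h1 x + (-1) * h2 x) (\<lambda>x. lam * (1 * h1 x + (-1) * h2 x))"
    by (rule gen_cong) (use i in \<open>auto simp: algebra_simps\<close>)
  from gen_zero[OF lam this] show ?thesis by eventually_elim simp
qed

lemma res_gen:
  assumes lam: "0 < lam" and f: "integrable M f"
  shows "generator M S (resolvent M S lam f) (\<lambda>x. lam * resolvent M S lam f x - f x)"
proof -
  interpret L: sgl M S lam by unfold_locales (rule lam)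
  show ?thesis unfolding resolvent_def by (rule someI_ex[OF L.resolvent_exists[OF f]])
qed

lemma res_int: "0 < lam \<Longrightarrow> integrable M f \<Longrightarrow> integrable M (resolvent M S lam f)"
  using res_gen gen_int by blast

lemma res_unique:
  assumes lam: "0 < lam" and f: "integrable M f" and g: "generator M S h (\<lambda>x. lam * h x - f x)"
  shows "AE x in M. h x = resolvent M S lam f x"
  by (rule gen_unique[OF lam f g res_gen[OF lam f]])

lemma res_comb:
  assumes lam: "0 < lam" and f: "integrable M f" and g: "integrable M g"
  shows "AE x in M. resolvent M S lam (\<lambda>y. a * f y + b * g y) x = a * resolvent M S lam f x + b * resolvent M S lam g x"
proof -
  have i: "integrable M (resolvent M S lam f)" "integrable M (resolvent M S lam g)" using res_int lam f g by auto
  have "generator M S (\<lambda>x. a * resolvent M S lam f x + b * resolvent M S lam g x)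
     (\<lambda>x. a * (lam * resolvent M S lam f x - f x) + b * (lam * resolvent M S lam g x - g x))"
    by (rule gen_comb[OF res_gen[OF lam f] res_gen[OF lam g]])
  then have "generator M S (\<lambda>x. a * resolvent M S lam f x + b * resolvent M S lam g x)
     (\<lambda>x. lam * (a * resolvent M S lam f x + b * resolvent M S lam g x) - (a * f x + b * g x))"
    by (rule gen_cong) (use i f g in \<open>auto simp: algebra_simps\<close>)
  from res_unique[OF lam _ this] f g show ?thesis by (auto elim: eventually_mono)
qed

lemma res_cong:
  assumes lam: "0 < lam" and f: "integrable M f" and g: "integrable M g" and ae: "AE x in M. f x = g x"
  shows "AE x in M. resolvent M S lam f x = resolvent M S lam g x"
proof -
  have i: "integrable M (resolvent M S lam f)" using res_int lam f by auto
  have "generator M S (resolvent M S lam f) (\<lambda>x. lam * resolvent M S lam f x - g x)"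
    by (rule gen_cong[OF res_gen[OF lam f]]) (use i g ae in auto)
  from res_unique[OF lam g this] show ?thesis .
qed

end


locale psg = sg +
  assumes pos: "\<And>t f. 0 \<le> t \<Longrightarrow> integrable M f \<Longrightarrow> AE x in M. 0 \<le> f x \<Longrightarrow> AE x in M. 0 \<le> S t f x"
begin

lemma psi_int:
  fixes \<psi> :: "'a \<Rightarrow> real"
  assumes "\<psi> \<in> borel_measurable M" "\<And>x. \<bar>\<psi> x\<bar> \<le> 1" "integrable M w"
  shows "integrable M (\<lambda>x. \<psi> x * w x)"
  by (rule Bochner_Integration.integrable_bound[OF assms(3)])
     (use assms in \<open>auto simp: abs_mult intro!: AE_I2 mult_left_le_one_le\<close>)

lemma int_psi_quot:
  fixes \<psi> :: "'a \<Rightarrow> real"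
  assumes "\<psi> \<in> borel_measurable M" "\<And>x. \<bar>\<psi> x\<bar> \<le> 1" "integrable M h" "0 < t"
  shows "(\<integral>x. \<psi> x * ((S t h x - h x) / t) \<partial>M) = ((\<integral>x. \<psi> x * S t h x \<partial>M) - (\<integral>x. \<psi> x * h x \<partial>M)) / t"
proof -
  have iS: "integrable M (S t h)" using Sint assms by auto
  have "(\<integral>x. \<psi> x * ((S t h x - h x) / t) \<partial>M) = (\<integral>x. (1/t) * (\<psi> x * S t h x - \<psi> x * h x) \<partial>M)"
    by (simp add: algebra_simps diff_divide_distrib)
  also have "\<dots> = (1/t) * (\<integral>x. \<psi> x * S t h x - \<psi> x * h x \<partial>M)" by simp
  also have "(\<integral>x. \<psi> x * S t h x - \<psi> x * h x \<partial>M) = (\<integral>x. \<psi> x * S t h x \<partial>M) - (\<integral>x. \<psi> x * h x \<partial>M)"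
    by (rule Bochner_Integration.integral_diff[OF psi_int[OF assms(1,2) iS] psi_int[OF assms(1,2,3)]])
  finally show ?thesis by simp
qed

lemma gen_pos:
  assumes lam: "0 < lam" and f: "integrable M f" "AE x in M. 0 \<le> f x"
    and g: "generator M S h (\<lambda>x. lam * h x - f x)"
  shows "AE x in M. 0 \<le> h x"
proof -
  have ih: "integrable M h" using gen_int g by auto
  define \<psi> where "\<psi> = (\<lambda>x. if h x < 0 then 1 else (0::real))"
  have psi: "\<psi> \<in> borel_measurable M" "\<And>x. \<bar>\<psi> x\<bar> \<le> 1" using ih by (auto simp: \<psi>_def)
  define hp where "hp = (\<lambda>x. max (h x) 0)"
  define hn where "hn = (\<lambda>x. max (- h x) 0)"
  have ihp: "integrable M hp" "integrable M hn" unfolding hp_def hn_def using ih by auto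
  have hsplit: "h = (\<lambda>x. hp x - hn x)" unfolding hp_def hn_def by (auto simp: max_def)
  have "eventually (\<lambda>t. 0 \<le> (\<integral>x. \<psi> x * ((S t h x - h x) / t) \<partial>M)) (at_right 0)"
    unfolding eventually_at_right_field
  proof (intro exI[of _ 1] conjI allI impI)
    fix t :: real assume t: "0 < t" "t < 1"
    have iS: "integrable M (S t hn)" using Sint t ihp by auto
    have a1: "AE x in M. S t h x = S t hp x - S t hn x"
      by (subst hsplit, rule Sdiff) (use t ihp in auto)
    have a2: "AE x in M. 0 \<le> S t hp x" "AE x in M. 0 \<le> S t hn x"
      using pos[of t hp] pos[of t hn] t ihp by (auto simp: hp_def hn_def)
    have "- nrm M hn \<le> - (\<integral>x. S t hn x \<partial>M)"
      using integral_le_nrm[of M "S t hn"] Snrm[of t hn] t ihp by linarith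
    also have "- (\<integral>x. S t hn x \<partial>M) \<le> (\<integral>x. \<psi> x * S t h x \<partial>M)"
    proof -
      have "(\<integral>x. - S t hn x \<partial>M) \<le> (\<integral>x. \<psi> x * S t h x \<partial>M)"
      proof (rule integral_mono_AE)
        show "integrable M (\<lambda>x. - S t hn x)" using iS by auto
        show "integrable M (\<lambda>x. \<psi> x * S t h x)" using psi_int[OF psi Sint[of t h]] t ih by auto
        from a1 a2 show "AE x in M. - S t hn x \<le> \<psi> x * S t h x"
          by eventually_elim (auto simp: \<psi>_def)
      qed
      then show ?thesis by simp
    qed
    finally have A: "- nrm M hn \<le> (\<integral>x. \<psi> x * S t h x \<partial>M)" .
    have B: "(\<integral>x. \<psi> x * h x \<partial>M) = - nrm M hn"
    proof -
      have "(\<lambda>x. \<psi> x * h x) = (\<lambda>x. - \<bar>hn x\<bar>)" by (auto simp: \<psi>_def hn_def)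
      then show ?thesis by (simp add: nrm_def)
    qed
    show "0 \<le> (\<integral>x. \<psi> x * ((S t h x - h x) / t) \<partial>M)"
      unfolding int_psi_quot[OF psi ih t(1)] using A B t by simp
  qed simp
  then have L: "0 \<le> (\<integral>x. \<psi> x * (lam * h x - f x) \<partial>M)"
    using tendsto_lowerbound[OF gen_psi_lim[OF g psi]] by simp
  have "(\<integral>x. \<psi> x * (lam * h x - f x) \<partial>M) \<le> (\<integral>x. - lam * hn x \<partial>M)"
  proof (rule integral_mono_AE)
    show "integrable M (\<lambda>x. \<psi> x * (lam * h x - f x))" by (rule psi_int[OF psi]) (use ih f in auto)
    show "integrable M (\<lambda>x. - lam * hn x)" using ihp by auto
    show "AE x in M. \<psi> x * (lam * h x - f x) \<le> - lam * hn x"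
      using f(2) by eventually_elim (use lam in \<open>auto simp: \<psi>_def hn_def\<close>)
  qed
  also have "\<dots> = - lam * nrm M hn" by (simp add: nrm_def hn_def)
  finally have X: "(\<integral>x. \<psi> x * (lam * h x - f x) \<partial>M) \<le> - lam * nrm M hn" .
  have "lam * nrm M hn \<le> 0" using X L by linarith
  then have "nrm M hn \<le> 0" using lam by (simp add: mult_le_0_iff)
  then have "nrm M hn = 0" using nrm_nonneg[of M hn] by simp
  then have "AE x in M. hn x = 0" using nrm_eq0_iff ihp by blast
  then show ?thesis by eventually_elim (simp add: hn_def)
qed

lemma res_pos:
  assumes "0 < lam" "integrable M f" "AE x in M. 0 \<le> f x"
  shows "AE x in M. 0 \<le> resolvent M S lam f x"
  by (rule gen_pos[OF assms res_gen[OF assms(1,2)]])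

lemma gen_strict:
  assumes lam: "0 < lam" and f: "integrable M f" "AE x in M. 0 < f x"
    and g: "generator M S h (\<lambda>x. lam * h x - f x)" and hp: "AE x in M. 0 \<le> h x"
  shows "AE x in M. 0 < h x"
proof -
  have ih: "integrable M h" using gen_int g by auto
  define \<psi> where "\<psi> = (\<lambda>x. if h x = 0 then 1 else (0::real))"
  have psi: "\<psi> \<in> borel_measurable M" "\<And>x. \<bar>\<psi> x\<bar> \<le> 1" using ih by (auto simp: \<psi>_def)
  have "eventually (\<lambda>t. 0 \<le> (\<integral>x. \<psi> x * ((S t h x - h x) / t) \<partial>M)) (at_right 0)"
    unfolding eventually_at_right_field
  proof (intro exI[of _ 1] conjI allI impI)
    fix t :: real assume t: "0 < t" "t < 1"
    have a: "AE x in M. 0 \<le> S t h x" using pos[of t h] t ih hp by auto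
    have A: "0 \<le> (\<integral>x. \<psi> x * S t h x \<partial>M)"
      by (rule integral_nonneg_AE) (use a in \<open>auto simp: \<psi>_def elim!: eventually_mono\<close>)
    have B: "(\<integral>x. \<psi> x * h x \<partial>M) = 0"
    proof -
      have "(\<lambda>x. \<psi> x * h x) = (\<lambda>x. 0)" by (auto simp: \<psi>_def)
      then show ?thesis by simp
    qed
    show "0 \<le> (\<integral>x. \<psi> x * ((S t h x - h x) / t) \<partial>M)"
      unfolding int_psi_quot[OF psi ih t(1)] using A B t by simp
  qed simp
  then have L: "0 \<le> (\<integral>x. \<psi> x * (lam * h x - f x) \<partial>M)"
    using tendsto_lowerbound[OF gen_psi_lim[OF g psi]] by simp
  have e: "(\<lambda>x. \<psi> x * (lam * h x - f x)) = (\<lambda>x. - (\<psi> x * f x))" by (auto simp: \<psi>_def)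
  have ipf: "integrable M (\<lambda>x. \<psi> x * f x)" by (rule psi_int[OF psi f(1)])
  have nn: "AE x in M. 0 \<le> \<psi> x * f x" using f(2) by eventually_elim (auto simp: \<psi>_def)
  have "(\<integral>x. \<psi> x * f x \<partial>M) \<le> 0" using L unfolding e by simp
  moreover have "0 \<le> (\<integral>x. \<psi> x * f x \<partial>M)" by (rule integral_nonneg_AE[OF nn])
  ultimately have "(\<integral>x. \<psi> x * f x \<partial>M) = 0" by simp
  then have "AE x in M. \<psi> x * f x = 0" using integral_nonneg_eq_0_iff_AE[OF ipf nn] by simp
  with f(2) hp show ?thesis
    by eventually_elim (auto simp: \<psi>_def split: if_splits)
qed

lemma res_mono:
  assumes mu: "0 < mu" "mu \<le> lam" and f: "integrable M f" "AE x in M. 0 \<le> f x"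
  shows "AE x in M. resolvent M S lam f x \<le> resolvent M S mu f x"
proof -
  have lam: "0 < lam" using mu by simp
  define h where "h = resolvent M S mu f"
  have ih: "integrable M h" unfolding h_def using res_int mu f by auto
  have hp: "AE x in M. 0 \<le> h x" unfolding h_def using res_pos mu f by auto
  define F where "F = (\<lambda>y. 1 * f y + (lam - mu) * h y)"
  have iF: "integrable M F" unfolding F_def using ih f by auto
  have "generator M S h (\<lambda>x. lam * h x - F x)"
    unfolding h_def F_def by (rule gen_cong[OF res_gen[OF mu(1) f(1)]]) (use ih iF f(1) in \<open>auto simp: h_def F_def algebra_simps\<close>)
  then have a1: "AE x in M. h x = resolvent M S lam F x" by (rule res_unique[OF lam iF])
  have a2: "AE x in M. resolvent M S lam F x = 1 * resolvent M S lam f x + (lam - mu) * resolvent M S lam h x"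
    unfolding F_def by (rule res_comb[OF lam f(1) ih])
  have a3: "AE x in M. 0 \<le> resolvent M S lam h x" by (rule res_pos[OF lam ih hp])
  from a1 a2 a3 show ?thesis unfolding h_def
    by eventually_elim (use mu in \<open>auto intro: mult_nonneg_nonneg\<close>)
qed

end


definition posop :: "'a measure \<Rightarrow> (('a \<Rightarrow> real) \<Rightarrow> ('a \<Rightarrow> real)) \<Rightarrow> bool" where
  "posop M T \<longleftrightarrow> l1_linear M T \<and>
     (\<forall>f. integrable M f \<and> (AE x in M. 0 \<le> f x) \<longrightarrow> (AE x in M. 0 \<le> T f x) \<and> (\<integral>x. T f x \<partial>M) \<le> (\<integral>x. f x \<partial>M))"

lemma posopD:
  assumes "posop M T" "integrable M f" "AE x in M. 0 \<le> f x"
  shows "AE x in M. 0 \<le> T f x" "(\<integral>x. T f x \<partial>M) \<le> (\<integral>x. f x \<partial>M)" "l1_linear M T"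
  using assms by (auto simp: posop_def)

lemma posop_lin: "posop M T \<Longrightarrow> l1_linear M T" by (simp add: posop_def)

lemma posop_contr:
  assumes "posop M T"
  shows "contr M T"
proof -
  have L: "l1_linear M T" using assms posop_lin by auto
  have "nrm M (T f) \<le> nrm M f" if f: "integrable M f" for f
  proof -
    define fp where "fp = (\<lambda>x. max (f x) 0)"
    define fn where "fn = (\<lambda>x. max (- f x) 0)"
    have i: "integrable M fp" "integrable M fn" unfolding fp_def fn_def using f by auto
    have nn: "AE x in M. 0 \<le> fp x" "AE x in M. 0 \<le> fn x" by (auto simp: fp_def fn_def)
    have fs: "f = (\<lambda>x. fp x - fn x)" unfolding fp_def fn_def by (auto simp: max_def)
    have a: "AE x in M. T f x = T fp x - T fn x" by (subst fs, rule lin_diff[OF L i])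
    have p1: "AE x in M. 0 \<le> T fp x" "AE x in M. 0 \<le> T fn x"
      using posopD(1)[OF assms i(1) nn(1)] posopD(1)[OF assms i(2) nn(2)] .
    have iT: "integrable M (T fp)" "integrable M (T fn)" using lin_int[OF L] i by auto
    have ab: "AE x in M. \<bar>T f x\<bar> \<le> T fp x + T fn x"
      using a p1 by eventually_elim auto
    have "nrm M (T f) \<le> (\<integral>x. T fp x + T fn x \<partial>M)"
      unfolding nrm_def
      by (rule integral_mono_AE) (use ab iT lin_int[OF L f] in auto)
    also have "\<dots> = (\<integral>x. T fp x \<partial>M) + (\<integral>x. T fn x \<partial>M)"
      by (rule Bochner_Integration.integral_add[OF iT])
    also have "\<dots> \<le> (\<integral>x. fp x \<partial>M) + (\<integral>x. fn x \<partial>M)"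
      using posopD(2)[OF assms i(1) nn(1)] posopD(2)[OF assms i(2) nn(2)] by simp
    also have "\<dots> = (\<integral>x. fp x + fn x \<partial>M)"
      by (rule Bochner_Integration.integral_add[OF i, symmetric])
    also have "\<dots> = nrm M f"
    proof -
      have "(\<lambda>x. fp x + fn x) = (\<lambda>x. \<bar>f x\<bar>)" by (auto simp: fp_def fn_def max_def)
      then show ?thesis by (simp add: nrm_def)
    qed
    finally show ?thesis .
  qed
  then show ?thesis using L by (simp add: contr_def)
qed

lemma lin_compose:
  assumes "l1_linear M T" "l1_linear M U"
  shows "l1_linear M (\<lambda>f. T (U f))"
proof -
  have iT: "integrable M (T f)" if "integrable M f" for f :: "'a \<Rightarrow> real" using lin_int assms that by blast
  have iU: "integrable M (U f)" if "integrable M f" for f :: "'a \<Rightarrow> real" using lin_int assms that by blast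
  show ?thesis unfolding l1_linear_def l1_def
  proof (intro conjI allI impI)
    fix f :: "'a \<Rightarrow> real" assume "integrable M f" then show "integrable M (T (U f))" using iT iU by auto
  next
    fix f g :: "'a \<Rightarrow> real" assume a: "integrable M f \<and> integrable M g \<and> (AE x in M. f x = g x)"
    have "AE x in M. U f x = U g x" using lin_cong[OF assms(2)] a by blast
    then show "AE x in M. T (U f) x = T (U g) x" using lin_cong[OF assms(1)] a iU by blast
  next
    fix a b :: real and f g :: "'a \<Rightarrow> real" assume fg: "integrable M f \<and> integrable M g"
    have u: "AE x in M. U (\<lambda>y. a * f y + b * g y) x = a * U f x + b * U g x"
      using lin_comb[OF assms(2)] fg by blast
    have t1: "AE x in M. T (U (\<lambda>y. a * f y + b * g y)) x = T (\<lambda>y. a * U f y + b * U g y) x"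
      by (rule lin_cong[OF assms(1)]) (use u fg iU in auto)
    have t2: "AE x in M. T (\<lambda>y. a * U f y + b * U g y) x = a * T (U f) x + b * T (U g) x"
      by (rule lin_comb[OF assms(1)]) (use fg iU in auto)
    from t1 t2 show "AE x in M. T (U (\<lambda>y. a * f y + b * g y)) x = a * T (U f) x + b * T (U g) x"
      by eventually_elim simp
  qed
qed

lemma lin_id: "l1_linear M (\<lambda>f. f)"
  by (simp add: l1_linear_def l1_def)

lemma posop_compose:
  assumes "posop M T" "posop M U"
  shows "posop M (\<lambda>f. T (U f))"
  unfolding posop_def
proof (intro conjI allI impI)
  show "l1_linear M (\<lambda>f. T (U f))" using lin_compose posop_lin assms by blast
  fix f :: "'a \<Rightarrow> real" assume a: "integrable M f \<and> (AE x in M. 0 \<le> f x)"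
  have iU: "integrable M (U f)" using lin_int posop_lin assms a by blast
  have pU: "AE x in M. 0 \<le> U f x" using posopD(1)[OF assms(2)] a by blast
  show "AE x in M. 0 \<le> T (U f) x" using posopD(1)[OF assms(1) iU pU] .
  show "(\<integral>x. T (U f) x \<partial>M) \<le> (\<integral>x. f x \<partial>M)"
  proof -
    have "(\<integral>x. U f x \<partial>M) \<le> (\<integral>x. f x \<partial>M)" using posopD(2)[OF assms(2)] a by blast
    then show ?thesis using posopD(2)[OF assms(1) iU pU] by linarith
  qed
qed

lemma posop_id: "posop M (\<lambda>f. f)"
  by (simp add: posop_def lin_id)

lemma posop_funpow: "posop M T \<Longrightarrow> posop M (T ^^ n)"
proof (induction n)
  case 0 then show ?case by (simp add: posop_id id_def)
next
  case (Suc n)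
  have "T ^^ Suc n = (\<lambda>f. T ((T ^^ n) f))" by (simp add: fun_eq_iff)
  then show ?case using posop_compose[OF Suc.prems Suc.IH[OF Suc.prems]] by simp
qed

lemma posop_mono:
  assumes "posop M T" "integrable M u" "integrable M v" "AE x in M. u x \<le> v x"
  shows "AE x in M. T u x \<le> T v x"
proof -
  have L: "l1_linear M T" using assms posop_lin by auto
  have "AE x in M. 0 \<le> T (\<lambda>y. v y - u y) x"
    by (rule posopD(1)[OF assms(1)]) (use assms in \<open>auto elim: eventually_mono\<close>)
  with lin_diff[OF L assms(3,2)] show ?thesis by eventually_elim simp
qed

lemma lim_ge:
  assumes F: "F \<noteq> bot" and a: "integrable M a" and c: "integrable M c"
    and ev: "eventually (\<lambda>l. integrable M (b l) \<and> (AE x in M. a x \<le> b l x)) F"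
    and lim: "((\<lambda>l. l1_dist M (b l) c) \<longlongrightarrow> 0) F"
  shows "AE x in M. a x \<le> c x"
proof -
  define w where "w = (\<lambda>x. max (a x - c x) 0)"
  have iw: "integrable M w" unfolding w_def using a c by auto
  have "eventually (\<lambda>l. (\<integral>x. w x \<partial>M) \<le> l1_dist M (b l) c) F"
    using ev
  proof eventually_elim
    case (elim l)
    show ?case unfolding l1_dist_def
      by (rule integral_mono_AE) (use elim iw c in \<open>auto simp: w_def elim!: eventually_mono\<close>)
  qed
  then have "(\<integral>x. w x \<partial>M) \<le> 0" using tendsto_lowerbound[OF lim _ F] by simp
  moreover have "0 \<le> (\<integral>x. w x \<partial>M)" by (simp add: w_def)
  ultimately have "(\<integral>x. w x \<partial>M) = 0" by simp
  then have "AE x in M. w x = 0" using integral_nonneg_eq_0_iff_AE[OF iw] by (simp add: w_def)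
  then show ?thesis by eventually_elim (simp add: w_def)
qed


lemma stoch_pos:
  assumes P: "stochastic M P" and f: "integrable M f" "AE x in M. 0 \<le> f x"
  shows "AE x in M. 0 \<le> P f x" "(\<integral>x. P f x \<partial>M) = (\<integral>x. f x \<partial>M)"
proof -
  have L: "l1_linear M P" using P by (simp add: stochastic_def)
  define c where "c = (\<integral>x. f x \<partial>M)"
  have c0: "0 \<le> c" unfolding c_def using f by (simp add: integral_nonneg_AE)
  have "(AE x in M. 0 \<le> P f x) \<and> (\<integral>x. P f x \<partial>M) = c"
  proof (cases "c = 0")
    case True
    then have z: "AE x in M. f x = 0" using integral_nonneg_eq_0_iff_AE[OF f] by (simp add: c_def)
    have "AE x in M. P f x = P (\<lambda>y. 0) x" by (rule lin_cong[OF L f(1)]) (use z in auto)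
    with lin_zero[OF L] have z2: "AE x in M. P f x = 0" by eventually_elim simp
    then have "(\<integral>x. P f x \<partial>M) = 0" by (rule integral_eq_zero_AE)
    with z2 True show ?thesis by (auto elim: eventually_mono)
  next
    case False
    then have cp: "0 < c" using c0 by simp
    define u where "u = (\<lambda>x. (1/c) * f x)"
    have "is_density M u"
      unfolding is_density_def l1_def u_def using f cp by (auto simp: c_def elim: eventually_mono)
    then have du: "is_density M (P u)" using P by (simp add: stochastic_def)
    have a: "AE x in M. P u x = (1/c) * P f x" unfolding u_def by (rule lin_cmult[OF L f(1)])
    have e: "AE x in M. P f x = c * P u x" using a by eventually_elim (use cp in simp)
    have iPu: "integrable M (P u)" "integrable M (P f)" using du lin_int[OF L f(1)] by (auto simp: is_density_def l1_def)
    have "AE x in M. 0 \<le> P f x" using e du unfolding is_density_def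
      by (auto elim!: eventually_elim2 intro: mult_nonneg_nonneg simp: cp less_imp_le)
    moreover have "(\<integral>x. P f x \<partial>M) = (\<integral>x. c * P u x \<partial>M)"
      by (rule integral_cong_AE) (use e iPu in auto)
    then have "(\<integral>x. P f x \<partial>M) = c" using du by (simp add: is_density_def)
    ultimately show ?thesis by simp
  qed
  then show "AE x in M. 0 \<le> P f x" "(\<integral>x. P f x \<partial>M) = (\<integral>x. f x \<partial>M)" by (auto simp: c_def)
qed

lemma stoch_posop: assumes P: "stochastic M P" shows "posop M P"
  unfolding posop_def
proof (intro conjI allI impI)
  show "l1_linear M P" using P by (simp add: stochastic_def)
  fix f :: "'a \<Rightarrow> real" assume a: "integrable M f \<and> (AE x in M. 0 \<le> f x)"
  show "AE x in M. 0 \<le> P f x" using stoch_pos(1)[OF P] a by blast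
  show "(\<integral>x. P f x \<partial>M) \<le> (\<integral>x. f x \<partial>M)" using stoch_pos(2)[OF P] a by simp
qed

locale mainloc =
  fixes M :: "'a measure" and P :: "('a \<Rightarrow> real) \<Rightarrow> ('a \<Rightarrow> real)"
    and \<phi> :: "'a \<Rightarrow> real" and S :: "real \<Rightarrow> ('a \<Rightarrow> real) \<Rightarrow> ('a \<Rightarrow> real)"
  assumes P_stoch: "stochastic M P"
    and phi_meas: "\<phi> \<in> borel_measurable M"
    and phi_nonneg: "\<And>x. 0 \<le> \<phi> x"
    and S_semi: "substochastic_semigroup M S"
    and dom_A: "\<And>f g. generator M S f g \<Longrightarrow> integrable M (\<lambda>x. \<phi> x * \<bar>f x\<bar>)"
    and int_A: "\<And>f g. generator M S f g \<Longrightarrow> (AE x in M. 0 \<le> f x) \<Longrightarrow>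
                  (\<integral>x. g x \<partial>M) = - (\<integral>x. \<phi> x * f x \<partial>M)"
begin

sublocale psg M S
proof
  show "c0_semigroup M S" using S_semi by (simp add: substochastic_semigroup_def)
  show "contr M (S t)" if "0 \<le> t" for t
    using S_semi that substoch_contr by (auto simp: substochastic_semigroup_def)
  show "AE x in M. 0 \<le> S t f x" if "0 \<le> t" "integrable M f" "AE x in M. 0 \<le> f x" for t f
    using S_semi that by (auto simp: substochastic_semigroup_def substochastic_def l1_def)
qed

lemma PL: "l1_linear M P" using P_stoch by (simp add: stochastic_def)

abbreviation R where "R lam \<equiv> resolvent M S lam"
abbreviation T where "T lam \<equiv> PphiR M P \<phi> S lam"

lemma T_eq: "T lam f = P (\<lambda>x. \<phi> x * R lam f x)" by (simp add: PphiR_def)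

lemma phiR_int:
  assumes lam: "0 < lam" and f: "integrable M f"
  shows "integrable M (\<lambda>x. \<phi> x * R lam f x)"
proof -
  have "integrable M (\<lambda>x. \<phi> x * \<bar>R lam f x\<bar>)" by (rule dom_A[OF res_gen[OF lam f]])
  then show ?thesis
    by (rule Bochner_Integration.integrable_bound) (use phi_meas res_int[OF lam f] phi_nonneg in \<open>auto simp: abs_mult\<close>)
qed

lemma T_lin:
  assumes lam: "0 < lam"
  shows "l1_linear M (T lam)"
  unfolding l1_linear_def l1_def
proof (intro conjI allI impI)
  fix f :: "'a \<Rightarrow> real" assume "integrable M f"
  then show "integrable M (T lam f)" unfolding T_eq using lin_int[OF PL phiR_int[OF lam]] by blast
next
  fix f g :: "'a \<Rightarrow> real" assume a: "integrable M f \<and> integrable M g \<and> (AE x in M. f x = g x)"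
  have "AE x in M. R lam f x = R lam g x" using res_cong[OF lam] a by blast
  then have "AE x in M. \<phi> x * R lam f x = \<phi> x * R lam g x" by eventually_elim simp
  then show "AE x in M. T lam f x = T lam g x" unfolding T_eq
    using lin_cong[OF PL phiR_int[OF lam] phiR_int[OF lam]] a by blast
next
  fix a b :: real and f g :: "'a \<Rightarrow> real" assume fg: "integrable M f \<and> integrable M g"
  have r: "AE x in M. R lam (\<lambda>y. a * f y + b * g y) x = a * R lam f x + b * R lam g x"
    using res_comb[OF lam] fg by blast
  have i1: "integrable M (\<lambda>x. \<phi> x * R lam (\<lambda>y. a * f y + b * g y) x)"
    using phiR_int[OF lam] fg by auto
  have i2: "integrable M (\<lambda>x. \<phi> x * R lam f x)" "integrable M (\<lambda>x. \<phi> x * R lam g x)"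
    using phiR_int[OF lam] fg by auto
  have t1: "AE x in M. P (\<lambda>x. \<phi> x * R lam (\<lambda>y. a * f y + b * g y) x) x
      = P (\<lambda>y. a * (\<phi> y * R lam f y) + b * (\<phi> y * R lam g y)) x"
    by (rule lin_cong[OF PL i1]) (use i2 r in \<open>auto simp: algebra_simps elim!: eventually_mono\<close>)
  have t2: "AE x in M. P (\<lambda>y. a * (\<phi> y * R lam f y) + b * (\<phi> y * R lam g y)) x
      = a * P (\<lambda>x. \<phi> x * R lam f x) x + b * P (\<lambda>x. \<phi> x * R lam g x) x"
    by (rule lin_comb[OF PL i2])
  from t1 t2 show "AE x in M. T lam (\<lambda>y. a * f y + b * g y) x = a * T lam f x + b * T lam g x"
    unfolding T_eq by eventually_elim simp
qed

lemma T_int: "0 < lam \<Longrightarrow> integrable M f \<Longrightarrow> integrable M (T lam f)"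
  using T_lin lin_int by blast

lemma T_props:
  assumes lam: "0 < lam" and f: "integrable M f" "AE x in M. 0 \<le> f x"
  shows "AE x in M. 0 \<le> T lam f x"
    and "(\<integral>x. T lam f x \<partial>M) = (\<integral>x. \<phi> x * R lam f x \<partial>M)"
    and "lam * (\<integral>x. R lam f x \<partial>M) = (\<integral>x. f x \<partial>M) - (\<integral>x. T lam f x \<partial>M)"
    and "0 \<le> (\<integral>x. R lam f x \<partial>M)"
proof -
  have rp: "AE x in M. 0 \<le> R lam f x" by (rule res_pos[OF lam f])
  have ir: "integrable M (R lam f)" by (rule res_int[OF lam f(1)])
  have pr: "AE x in M. 0 \<le> \<phi> x * R lam f x" using rp by eventually_elim (simp add: phi_nonneg)
  show "AE x in M. 0 \<le> T lam f x" unfolding T_eq by (rule stoch_pos(1)[OF P_stoch phiR_int[OF lam f(1)] pr])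
  show e: "(\<integral>x. T lam f x \<partial>M) = (\<integral>x. \<phi> x * R lam f x \<partial>M)"
    unfolding T_eq by (rule stoch_pos(2)[OF P_stoch phiR_int[OF lam f(1)] pr])
  have "(\<integral>x. lam * R lam f x - f x \<partial>M) = - (\<integral>x. \<phi> x * R lam f x \<partial>M)"
    by (rule int_A[OF res_gen[OF lam f(1)] rp])
  moreover have "(\<integral>x. lam * R lam f x - f x \<partial>M) = lam * (\<integral>x. R lam f x \<partial>M) - (\<integral>x. f x \<partial>M)"
    using ir f by simp
  ultimately show "lam * (\<integral>x. R lam f x \<partial>M) = (\<integral>x. f x \<partial>M) - (\<integral>x. T lam f x \<partial>M)"
    using e by simp
  show "0 \<le> (\<integral>x. R lam f x \<partial>M)" using rp by (rule integral_nonneg_AE)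
qed

lemma T_posop:
  assumes lam: "0 < lam"
  shows "posop M (T lam)"
  unfolding posop_def
proof (intro conjI allI impI T_lin[OF lam])
  fix f :: "'a \<Rightarrow> real" assume a: "integrable M f \<and> (AE x in M. 0 \<le> f x)"
  then show "AE x in M. 0 \<le> T lam f x" using T_props(1)[OF lam] by blast
  have "lam * (\<integral>x. R lam f x \<partial>M) = (\<integral>x. f x \<partial>M) - (\<integral>x. T lam f x \<partial>M)" "0 \<le> (\<integral>x. R lam f x \<partial>M)"
    using T_props(3,4)[OF lam] a by blast+
  then show "(\<integral>x. T lam f x \<partial>M) \<le> (\<integral>x. f x \<partial>M)" using lam
    by (smt (verit, best) mult_nonneg_nonneg)
qed

lemma T_mono_lam:
  assumes mu: "0 < mu" "mu \<le> lam" and f: "integrable M f" "AE x in M. 0 \<le> f x"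
  shows "AE x in M. T lam f x \<le> T mu f x"
proof -
  have lam: "0 < lam" using mu by simp
  have a: "AE x in M. \<phi> x * R lam f x \<le> \<phi> x * R mu f x"
    using res_mono[OF mu f] by eventually_elim (simp add: mult_left_mono phi_nonneg)
  show ?thesis unfolding T_eq
    by (rule posop_mono[OF stoch_posop[OF P_stoch] phiR_int[OF lam f(1)] phiR_int[OF mu(1) f(1)] a])
qed

end


locale mainK = mainloc +
  fixes fstar :: "'a \<Rightarrow> real"
  assumes fstar_dens: "is_density M fstar"
    and fstar_pos: "AE x in M. 0 < fstar x"
    and K_subinv: "\<exists>g. l1 M g \<and>
        ((\<lambda>l. l1_dist M (PphiR M P \<phi> S l fstar) g) \<longlongrightarrow> 0) (at_right 0) \<and>
        (AE x in M. g x \<le> fstar x)"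
begin

lemma fs_int: "integrable M fstar" using fstar_dens by (simp add: is_density_def l1_def)
lemma fs_nn: "AE x in M. 0 \<le> fstar x" using fstar_pos by (auto elim: eventually_mono)

lemma T_sub:
  assumes lam: "0 < lam"
  shows "AE x in M. T lam fstar x \<le> fstar x"
proof -
  obtain g where g: "integrable M g" "((\<lambda>l. l1_dist M (T l fstar) g) \<longlongrightarrow> 0) (at_right 0)"
    "AE x in M. g x \<le> fstar x"
    using K_subinv by (auto simp: l1_def)
  have "AE x in M. T lam fstar x \<le> g x"
  proof (rule lim_ge[OF _ T_int[OF lam fs_int] g(1) _ g(2)])
    show "at_right (0::real) \<noteq> bot" by (rule trivial_limit_at_right_real)
    show "\<forall>\<^sub>F l in at_right 0. integrable M (T l fstar) \<and> (AE x in M. T lam fstar x \<le> T l fstar x)"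
      unfolding eventually_at_right_field
      by (intro exI[of _ lam] conjI allI impI lam T_int fs_int T_mono_lam fs_nn) auto
  qed
  with g(3) show ?thesis by eventually_elim simp
qed

context
  fixes lam :: real
  assumes lam: "0 < lam"
begin

definition It where "It n = (T lam ^^ n) fstar"

lemma TP: "posop M (T lam)" using T_posop[OF lam] .
lemma TPn: "posop M (T lam ^^ n)" using posop_funpow[OF TP] .

lemma It_int: "integrable M (It n)"
  unfolding It_def using lin_int[OF posop_lin[OF TPn] fs_int] .

lemma It_nn: "AE x in M. 0 \<le> It n x"
  unfolding It_def using posopD(1)[OF TPn fs_int fs_nn] .

lemma It_Suc: "It (Suc n) = T lam (It n)" by (simp add: It_def)

lemma It_dec: "AE x in M. It (Suc n) x \<le> It n x"
proof (induction n)
  case 0 show ?case using T_sub[OF lam] by (simp add: It_def)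
next
  case (Suc n)
  show ?case unfolding It_Suc[of "Suc n"] It_Suc[of n]
    by (rule posop_mono[OF TP]) (use It_int T_int[OF lam It_int] Suc[unfolded It_Suc] in auto)
qed

lemma It_dec2: "n \<le> m \<Longrightarrow> AE x in M. It m x \<le> It n x"
proof (induction m)
  case 0 then show ?case by simp
next
  case (Suc m)
  show ?case
  proof (cases "n = Suc m")
    case True then show ?thesis by simp
  next
    case False
    then have "n \<le> m" using Suc.prems by simp
    then have h: "AE x in M. It m x \<le> It n x" by (rule Suc.IH)
    from h It_dec[of m] show ?thesis by eventually_elim simp
  qed
qed

definition a where "a n = (\<integral>x. It n x \<partial>M)"

lemma a_nn: "0 \<le> a n" unfolding a_def using It_nn by (rule integral_nonneg_AE)

lemma a_dec: assumes "n \<le> m" shows "a m \<le> a n"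
  unfolding a_def by (rule integral_mono_AE[OF It_int It_int It_dec2[OF assms]])

lemma It_dist: "n \<le> m \<Longrightarrow> l1_dist M (It m) (It n) = a n - a m"
proof -
  assume nm: "n \<le> m"
  have "l1_dist M (It m) (It n) = (\<integral>x. It n x - It m x \<partial>M)"
    unfolding l1_dist_def
    by (rule integral_cong_AE) (use It_dec2[OF nm] It_int in \<open>auto elim!: eventually_mono\<close>)
  also have "\<dots> = a n - a m" unfolding a_def by (rule Bochner_Integration.integral_diff[OF It_int It_int])
  finally show ?thesis .
qed

lemma a_conv: "convergent a"
proof -
  have "Bseq a"
    by (rule BseqI'[of _ "a 0"]) (use a_nn a_dec[of 0] in auto)
  moreover have "monoseq a" unfolding monoseq_def using a_dec by blast
  ultimately show ?thesis by (rule Bseq_monoseq_convergent)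
qed


lemma It_lim: "\<exists>g. integrable M g \<and> (\<lambda>n. l1_dist M (It n) g) \<longlonglongrightarrow> 0"
proof (rule l1_complete[OF It_int])
  fix e :: real assume e: "0 < e"
  have "Cauchy a" using a_conv convergent_Cauchy by blast
  then obtain N where N: "\<forall>m\<ge>N. \<forall>n\<ge>N. dist (a m) (a n) < e" using e unfolding Cauchy_def by blast
  show "\<exists>N. \<forall>m\<ge>N. \<forall>n\<ge>N. l1_dist M (It m) (It n) < e"
  proof (intro exI[of _ N] allI impI)
    fix m n assume mn: "N \<le> m" "N \<le> n"
    have "l1_dist M (It m) (It n) = \<bar>a m - a n\<bar>"
    proof (cases "n \<le> m")
      case True then show ?thesis using It_dist[OF True] a_dec[OF True] by simp
    next
      case False then have "m \<le> n" by simp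
      then show ?thesis using It_dist[of m n] a_dec[of m n] l1_dist_commute[of M "It m" "It n"] by simp
    qed
    then show "l1_dist M (It m) (It n) < e" using N mn by (simp add: dist_real_def)
  qed
qed

lemma a_zero: "a \<longlonglongrightarrow> 0"
proof -
  obtain g where g: "integrable M g" "(\<lambda>n. l1_dist M (It n) g) \<longlonglongrightarrow> 0" using It_lim by blast
  have gnn: "AE x in M. 0 \<le> g x"
    by (rule lim_ge[of sequentially M "\<lambda>x. 0" g It]) (use g It_int It_nn in auto)
  have TPc: "contr M (T lam)" using posop_contr[OF TP] .
  have l1: "(\<lambda>n. l1_dist M (It (Suc n)) (T lam g)) \<longlonglongrightarrow> 0"
    unfolding It_Suc by (rule lim_op[OF TPc It_int g(1) g(2)])
  have l2: "(\<lambda>n. l1_dist M (It (Suc n)) g) \<longlonglongrightarrow> 0" using LIMSEQ_Suc[OF g(2)] .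
  have Tg: "AE x in M. T lam g x = g x"
    by (rule l1_lim_unique[OF It_int T_int[OF lam g(1)] g(1) l1 l2])
  have "lam * (\<integral>x. R lam g x \<partial>M) = (\<integral>x. g x \<partial>M) - (\<integral>x. T lam g x \<partial>M)"
    by (rule T_props(3)[OF lam g(1) gnn])
  also have "(\<integral>x. T lam g x \<partial>M) = (\<integral>x. g x \<partial>M)"
    by (rule integral_cong_AE) (use Tg T_int[OF lam g(1)] g(1) in auto)
  finally have "(\<integral>x. R lam g x \<partial>M) = 0" using lam by simp
  then have R0: "AE x in M. R lam g x = 0"
    using integral_nonneg_eq_0_iff_AE[OF res_int[OF lam g(1)] res_pos[OF lam g(1) gnn]] by simp
  have "AE x in M. T lam g x = P (\<lambda>y. 0) x"
    unfolding T_eq by (rule lin_cong[OF PL phiR_int[OF lam g(1)]]) (use R0 in \<open>auto elim: eventually_mono\<close>)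
  with lin_zero[OF PL] Tg have g0: "AE x in M. g x = 0" by eventually_elim simp
  then have ig0: "(\<integral>x. g x \<partial>M) = 0" by (rule integral_eq_zero_AE)
  have b: "\<bar>a n - (\<integral>x. g x \<partial>M)\<bar> \<le> l1_dist M (It n) g" for n
    using abs_integral_le_nrm[of M "\<lambda>x. It n x - g x"] Bochner_Integration.integral_diff[OF It_int g(1), of n]
    by (simp add: a_def l1_dist_nrm)
  have "(\<lambda>n. a n - (\<integral>x. g x \<partial>M)) \<longlonglongrightarrow> 0"
  proof (rule tendsto_sandwich[OF _ _ g(2)[THEN tendsto_minus, simplified] g(2)])
    show "\<forall>\<^sub>F n in sequentially. - l1_dist M (It n) g \<le> a n - (\<integral>x. g x \<partial>M)"
    proof (intro always_eventually allI)
      fix n show "- l1_dist M (It n) g \<le> a n - (\<integral>x. g x \<partial>M)" using b[of n] by linarith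
    qed
    show "\<forall>\<^sub>F n in sequentially. a n - (\<integral>x. g x \<partial>M) \<le> l1_dist M (It n) g"
      using b by (intro always_eventually allI) (simp add: abs_le_iff)
  qed
  then show ?thesis using ig0 by simp
qed

end

end


context mainK begin

lemma trunc_lim:
  assumes f: "integrable M f" "AE x in M. 0 \<le> f x"
  shows "(\<lambda>N. \<integral>x. f x - min (f x) (real N * fstar x) \<partial>M) \<longlonglongrightarrow> 0"
proof -
  have "(\<lambda>N. \<integral>x. f x - min (f x) (real N * fstar x) \<partial>M) \<longlonglongrightarrow> (\<integral>x. 0 \<partial>M)"
  proof (rule integral_dominated_convergence[where w = f])
    show "(\<lambda>x. 0) \<in> borel_measurable M" by simp
    show "(\<lambda>x. f x - min (f x) (real N * fstar x)) \<in> borel_measurable M" for N using f fs_int by auto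
    show "integrable M f" by fact
    show "AE x in M. (\<lambda>N. f x - min (f x) (real N * fstar x)) \<longlonglongrightarrow> 0"
      using fstar_pos
    proof eventually_elim
      case (elim x)
      obtain K :: nat where K: "f x / fstar x < real K" using reals_Archimedean2 by blast
      have "eventually (\<lambda>N. f x - min (f x) (real N * fstar x) = 0) sequentially"
        unfolding eventually_sequentially
      proof (intro exI[of _ K] allI impI)
        fix N assume "K \<le> N"
        then have "f x / fstar x < real N" using K by (meson of_nat_le_iff order_less_le_trans)
        then have "f x \<le> real N * fstar x" using elim by (simp add: divide_less_eq less_imp_le)
        then show "f x - min (f x) (real N * fstar x) = 0" by simp
      qed
      then show ?case by (rule tendsto_eventually)
    qed
    show "AE x in M. norm (f x - min (f x) (real N * fstar x)) \<le> f x" for N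
      using f(2) fs_nn by eventually_elim (auto simp: min_def)
  qed
  then show ?thesis by simp
qed

lemma Tn_bound:
  assumes lam: "0 < lam" and f: "integrable M f" "AE x in M. 0 \<le> f x"
  shows "(\<integral>x. (T lam ^^ n) f x \<partial>M) \<le> real N * a lam n + (\<integral>x. f x - min (f x) (real N * fstar x) \<partial>M)"
proof -
  define Tn where "Tn = T lam ^^ n"
  have TP: "posop M Tn" unfolding Tn_def using TPn[OF lam] .
  have L: "l1_linear M Tn" using posop_lin[OF TP] .
  define m where "m = (\<lambda>x. min (f x) (real N * fstar x))"
  define r where "r = (\<lambda>x. f x - m x)"
  have im: "integrable M m" "integrable M r" "integrable M (\<lambda>x. real N * fstar x)"
    unfolding m_def r_def using f fs_int by auto
  have rnn: "AE x in M. 0 \<le> r x" by (auto simp: r_def m_def)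
  have fs: "f = (\<lambda>x. m x + r x)" by (auto simp: r_def)
  have a1: "AE x in M. Tn f x = Tn m x + Tn r x" by (subst fs, rule lin_add[OF L im(1,2)])
  have a2: "AE x in M. Tn m x \<le> Tn (\<lambda>x. real N * fstar x) x"
    by (rule posop_mono[OF TP im(1) im(3)]) (auto simp: m_def)
  have a3: "AE x in M. Tn (\<lambda>x. real N * fstar x) x = real N * It lam n x"
    unfolding It_def[OF lam] Tn_def[symmetric] by (rule lin_cmult[OF L fs_int])
  have iT: "integrable M (Tn f)" "integrable M (Tn m)" "integrable M (Tn r)"
    using lin_int[OF L] f im by auto
  have "(\<integral>x. Tn f x \<partial>M) = (\<integral>x. Tn m x + Tn r x \<partial>M)"
    by (rule integral_cong_AE) (use a1 iT in auto)
  also have "\<dots> = (\<integral>x. Tn m x \<partial>M) + (\<integral>x. Tn r x \<partial>M)"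
    by (rule Bochner_Integration.integral_add[OF iT(2,3)])
  also have "(\<integral>x. Tn m x \<partial>M) \<le> (\<integral>x. real N * It lam n x \<partial>M)"
    by (rule integral_mono_AE) (use iT It_int[OF lam] a2 a3 in \<open>auto elim!: eventually_elim2\<close>)
  also have "(\<integral>x. Tn r x \<partial>M) \<le> (\<integral>x. r x \<partial>M)" by (rule posopD(2)[OF TP im(2) rnn])
  finally show ?thesis by (simp add: Tn_def a_def[OF lam] r_def m_def)
qed

lemma Tn_zero:
  assumes lam: "0 < lam" and f: "integrable M f" "AE x in M. 0 \<le> f x"
  shows "(\<lambda>n. \<integral>x. (T lam ^^ n) f x \<partial>M) \<longlonglongrightarrow> 0"
proof (rule LIMSEQ_I)
  fix e :: real assume e: "0 < e"
  obtain N where N: "norm ((\<integral>x. f x - min (f x) (real N * fstar x) \<partial>M) - 0) < e / 2"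
    using LIMSEQ_D[OF trunc_lim[OF f], of "e/2"] e by auto
  have "(\<lambda>n. real N * a lam n) \<longlonglongrightarrow> real N * 0"
    by (intro tendsto_mult tendsto_const a_zero[OF lam])
  then have t0: "(\<lambda>n. real N * a lam n) \<longlonglongrightarrow> 0" by simp
  obtain n0 where n0: "\<forall>n\<ge>n0. norm (real N * a lam n - 0) < e / 2"
    using LIMSEQ_D[OF t0, of "e/2"] e by force
  show "\<exists>no. \<forall>n\<ge>no. norm ((\<integral>x. (T lam ^^ n) f x \<partial>M) - 0) < e"
  proof (intro exI[of _ n0] allI impI)
    fix n assume "n0 \<le> n"
    have nn: "0 \<le> (\<integral>x. (T lam ^^ n) f x \<partial>M)"
      by (rule integral_nonneg_AE[OF posopD(1)[OF TPn[OF lam] f]])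
    have "(\<integral>x. (T lam ^^ n) f x \<partial>M) < e"
      using Tn_bound[OF lam f, of n N] N n0 \<open>n0 \<le> n\<close> by auto
    then show "norm ((\<integral>x. (T lam ^^ n) f x \<partial>M) - 0) < e" using nn by simp
  qed
qed

end


context sg begin

lemma step_eq:
  assumes g: "generator M S h k" and r0: "0 \<le> r0" and s: "0 < s"
  shows "\<bar>(\<integral>x. S r0 h x \<partial>M) - (\<integral>x. S (r0 + s) h x \<partial>M) + s * (\<integral>x. S r0 k x \<partial>M)\<bar>
      \<le> s * l1_dist M (\<lambda>x. (S s h x - h x) / s) k"
proof -
  have ih: "integrable M h" "integrable M k" using gen_int g by auto
  have s0: "0 \<le> s" using s by simp
  define e where "e = (\<lambda>x. h x - S s h x + s * k x)"
  have iSh: "integrable M (S s h)" using Sint s0 ih by auto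
  have ie: "integrable M e" unfolding e_def using iSh ih by auto
  have ne: "nrm M e = s * l1_dist M (\<lambda>x. (S s h x - h x) / s) k"
  proof -
    have "e = (\<lambda>x. (- s) * ((S s h x - h x) / s - k x))" unfolding e_def using s by (auto simp: field_simps)
    then have "nrm M e = \<bar>- s\<bar> * nrm M (\<lambda>x. (S s h x - h x) / s - k x)"
      using nrm_cmult[of M "- s" "\<lambda>x. (S s h x - h x) / s - k x"] by simp
    then show ?thesis using s by (simp add: l1_dist_nrm)
  qed
  have a1: "AE x in M. S (r0 + s) h x = S r0 (S s h) x" by (rule Sadd[OF r0 s0 ih(1)])
  have eq: "(\<lambda>x. h x - S s h x) = (\<lambda>x. (- s) * k x + 1 * e x)" unfolding e_def by auto
  have a2: "AE x in M. S r0 (\<lambda>x. h x - S s h x) x = S r0 h x - S r0 (S s h) x"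
    by (rule Sdiff[OF r0 ih(1) iSh])
  have a3: "AE x in M. S r0 (\<lambda>x. (- s) * k x + 1 * e x) x = (- s) * S r0 k x + 1 * S r0 e x"
    by (rule lin_comb[OF lin[OF r0] ih(2) ie])
  have iS: "integrable M (S r0 h)" "integrable M (S (r0 + s) h)" "integrable M (S r0 (S s h))"
    "integrable M (S r0 k)" "integrable M (S r0 e)"
    using Sint r0 s0 ih iSh ie by auto
  have "(\<integral>x. S r0 h x \<partial>M) - (\<integral>x. S (r0 + s) h x \<partial>M) = (\<integral>x. S r0 h x - S (r0 + s) h x \<partial>M)"
    by (rule Bochner_Integration.integral_diff[OF iS(1,2), symmetric])
  also have "\<dots> = (\<integral>x. (- s) * S r0 k x + S r0 e x \<partial>M)"
  proof (rule integral_cong_AE)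
    have a2': "AE x in M. S r0 (\<lambda>x. (- s) * k x + 1 * e x) x = S r0 h x - S r0 (S s h) x"
      using a2 unfolding eq .
    from a1 a2' a3 show "AE x in M. S r0 h x - S (r0 + s) h x = (- s) * S r0 k x + S r0 e x"
      by eventually_elim simp
  qed (use iS in auto)
  also have "\<dots> = - s * (\<integral>x. S r0 k x \<partial>M) + (\<integral>x. S r0 e x \<partial>M)"
    using iS by simp
  finally have E: "(\<integral>x. S r0 h x \<partial>M) - (\<integral>x. S (r0 + s) h x \<partial>M) + s * (\<integral>x. S r0 k x \<partial>M) = (\<integral>x. S r0 e x \<partial>M)"
    by simp
  have "\<bar>\<integral>x. S r0 e x \<partial>M\<bar> \<le> nrm M e" using abs_integral_le_nrm[of M "S r0 e"] Snrm[OF r0 ie] by linarith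
  then show ?thesis unfolding E ne .
qed

end

locale mainP = mainK +
  fixes Pt :: "real \<Rightarrow> ('a \<Rightarrow> real) \<Rightarrow> ('a \<Rightarrow> real)"
  assumes Pt_semi: "substochastic_semigroup M Pt"
    and Pt_res: "\<And>l f. 0 < l \<Longrightarrow> l1 M f \<Longrightarrow>
        ((\<lambda>n. l1_dist M
            (resolvent M S l (\<lambda>x. \<Sum>k\<le>n. ((PphiR M P \<phi> S l) ^^ k) f x))
            (resolvent M Pt l f)) \<longlonglongrightarrow> 0)"
begin

sublocale PT: sg M Pt
proof
  show "c0_semigroup M Pt" using Pt_semi by (simp add: substochastic_semigroup_def)
  show "contr M (Pt t)" if "0 \<le> t" for t
    using Pt_semi that substoch_contr by (auto simp: substochastic_semigroup_def)
qed

lemma Pt_pos: "0 \<le> t \<Longrightarrow> integrable M f \<Longrightarrow> AE x in M. 0 \<le> f x \<Longrightarrow> AE x in M. 0 \<le> Pt t f x"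
  using Pt_semi by (auto simp: substochastic_semigroup_def substochastic_def l1_def)

lemma RC_props:
  assumes lam: "0 < lam" and f: "integrable M f" "AE x in M. 0 \<le> f x"
  shows "AE x in M. 0 \<le> resolvent M Pt lam f x"
    and "lam * (\<integral>x. resolvent M Pt lam f x \<partial>M) = (\<integral>x. f x \<partial>M)"
proof -
  define u where "u n = (\<lambda>x. \<Sum>k\<le>n. (T lam ^^ k) f x)" for n
  have iTk: "integrable M ((T lam ^^ k) f)" for k using lin_int[OF posop_lin[OF TPn[OF lam]] f(1)] .
  have pTk: "AE x in M. 0 \<le> (T lam ^^ k) f x" for k using posopD(1)[OF TPn[OF lam] f] .
  have iu: "integrable M (u n)" for n unfolding u_def using iTk by auto
  have pu: "AE x in M. 0 \<le> u n x" for n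
  proof -
    have "AE x in M. \<forall>k. 0 \<le> (T lam ^^ k) f x" unfolding AE_all_countable using pTk by blast
    then show ?thesis unfolding u_def by eventually_elim (auto intro: sum_nonneg)
  qed
  define c where "c k = (\<integral>x. (T lam ^^ k) f x \<partial>M)" for k
  have eqn: "lam * (\<integral>x. R lam (u n) x \<partial>M) = c 0 - c (Suc n)" for n
  proof -
    have "lam * (\<integral>x. R lam (u n) x \<partial>M) = (\<integral>x. u n x \<partial>M) - (\<integral>x. T lam (u n) x \<partial>M)"
      by (rule T_props(3)[OF lam iu pu])
    also have "(\<integral>x. u n x \<partial>M) = (\<Sum>k\<le>n. c k)"
      unfolding u_def c_def by (rule Bochner_Integration.integral_sum) (use iTk in auto)
    also have "(\<integral>x. T lam (u n) x \<partial>M) = (\<Sum>k\<le>n. c (Suc k))"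
    proof -
      have a: "AE x in M. T lam (u n) x = (\<Sum>k\<le>n. T lam ((T lam ^^ k) f) x)"
        unfolding u_def by (rule lin_sum[OF T_lin[OF lam]]) (use iTk in auto)
      have "(\<integral>x. T lam (u n) x \<partial>M) = (\<integral>x. (\<Sum>k\<le>n. (T lam ^^ Suc k) f x) \<partial>M)"
        by (rule integral_cong_AE) (use a T_int[OF lam iu] T_int[OF lam iTk] in auto)
      also have "\<dots> = (\<Sum>k\<le>n. c (Suc k))"
        unfolding c_def by (rule Bochner_Integration.integral_sum) (use iTk[of "Suc _"] in auto)
      finally show ?thesis .
    qed
    also have "(\<Sum>k\<le>n. c k) - (\<Sum>k\<le>n. c (Suc k)) = (\<Sum>k\<le>n. c k - c (Suc k))"
      by (simp add: sum_subtractf)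
    also have "\<dots> = c 0 - c (Suc n)" by (rule sum_telescope)
    finally show ?thesis .
  qed
  have lim: "(\<lambda>n. l1_dist M (R lam (u n)) (resolvent M Pt lam f)) \<longlonglongrightarrow> 0"
    using Pt_res[OF lam] f(1) unfolding u_def l1_def by blast
  have iR: "integrable M (R lam (u n))" for n using res_int[OF lam iu] .
  have iRC: "integrable M (resolvent M Pt lam f)" using PT.res_int[OF lam f(1)] .
  show "AE x in M. 0 \<le> resolvent M Pt lam f x"
    by (rule lim_ge[of sequentially M "\<lambda>x. 0" _ "\<lambda>n. R lam (u n)"])
       (use iR iRC lim res_pos[OF lam iu pu] in auto)
  have l1: "(\<lambda>n. \<integral>x. R lam (u n) x \<partial>M) \<longlonglongrightarrow> (\<integral>x. resolvent M Pt lam f x \<partial>M)"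
  proof -
    have b: "\<bar>(\<integral>x. R lam (u n) x \<partial>M) - (\<integral>x. resolvent M Pt lam f x \<partial>M)\<bar>
        \<le> l1_dist M (R lam (u n)) (resolvent M Pt lam f)" for n
      using abs_integral_le_nrm[of M "\<lambda>x. R lam (u n) x - resolvent M Pt lam f x"]
        Bochner_Integration.integral_diff[OF iR iRC, of n] by (simp add: l1_dist_nrm)
    have "(\<lambda>n. (\<integral>x. R lam (u n) x \<partial>M) - (\<integral>x. resolvent M Pt lam f x \<partial>M)) \<longlonglongrightarrow> 0"
    proof (rule tendsto_sandwich[OF _ _ lim[THEN tendsto_minus, simplified] lim])
      show "\<forall>\<^sub>F n in sequentially. - l1_dist M (R lam (u n)) (resolvent M Pt lam f)
          \<le> (\<integral>x. R lam (u n) x \<partial>M) - (\<integral>x. resolvent M Pt lam f x \<partial>M)"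
      proof (intro always_eventually allI)
        fix n show "- l1_dist M (R lam (u n)) (resolvent M Pt lam f)
          \<le> (\<integral>x. R lam (u n) x \<partial>M) - (\<integral>x. resolvent M Pt lam f x \<partial>M)" using b[of n] by linarith
      qed
      show "\<forall>\<^sub>F n in sequentially. (\<integral>x. R lam (u n) x \<partial>M) - (\<integral>x. resolvent M Pt lam f x \<partial>M)
          \<le> l1_dist M (R lam (u n)) (resolvent M Pt lam f)"
      proof (intro always_eventually allI)
        fix n show "(\<integral>x. R lam (u n) x \<partial>M) - (\<integral>x. resolvent M Pt lam f x \<partial>M)
          \<le> l1_dist M (R lam (u n)) (resolvent M Pt lam f)" using b[of n] by linarith
      qed
    qed
    then show ?thesis by (simp add: LIM_zero_iff)
  qed
  have l2: "(\<lambda>n. \<integral>x. R lam (u n) x \<partial>M) \<longlonglongrightarrow> (c 0 - 0) / lam"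
  proof -
    have "(\<lambda>n. c (Suc n)) \<longlonglongrightarrow> 0"
      using LIMSEQ_Suc[OF Tn_zero[OF lam f]] by (simp add: c_def)
    then have "(\<lambda>n. (c 0 - c (Suc n)) / lam) \<longlonglongrightarrow> (c 0 - 0) / lam"
      using lam by (intro tendsto_intros) auto
    moreover have "(c 0 - c (Suc n)) / lam = (\<integral>x. R lam (u n) x \<partial>M)" for n
      using eqn[of n] lam by (simp add: field_simps)
    ultimately show ?thesis by simp
  qed
  have "(\<integral>x. resolvent M Pt lam f x \<partial>M) = (c 0 - 0) / lam" using LIMSEQ_unique[OF l1 l2] .
  then show "lam * (\<integral>x. resolvent M Pt lam f x \<partial>M) = (\<integral>x. f x \<partial>M)"
    using lam by (simp add: c_def)
qed

end


context mainP begin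

lemma Pt_int_le: "0 \<le> r \<Longrightarrow> integrable M f \<Longrightarrow> AE x in M. 0 \<le> f x \<Longrightarrow> (\<integral>x. Pt r f x \<partial>M) \<le> (\<integral>x. f x \<partial>M)"
proof -
  assume a: "0 \<le> r" "integrable M f" "AE x in M. 0 \<le> f x"
  have "(\<integral>x. Pt r f x \<partial>M) \<le> nrm M (Pt r f)" by (rule integral_le_nrm)
  also have "\<dots> \<le> nrm M f" using PT.Snrm a by auto
  also have "\<dots> = (\<integral>x. f x \<partial>M)" unfolding nrm_def
    by (rule integral_cong_AE) (use a in \<open>auto elim: eventually_mono\<close>)
  finally show ?thesis .
qed

lemma step_bound:
  assumes lam: "0 < lam" and f: "integrable M f" "AE x in M. 0 \<le> f x"
    and g: "generator M Pt h (\<lambda>x. lam * h x - f x)" and hint: "lam * (\<integral>x. h x \<partial>M) = (\<integral>x. f x \<partial>M)"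
    and r0: "0 \<le> r0" and s: "0 < s"
  shows "(\<integral>x. Pt r0 h x \<partial>M) - (\<integral>x. Pt (r0 + s) h x \<partial>M)
     \<le> s * lam * ((\<integral>x. h x \<partial>M) - (\<integral>x. Pt r0 h x \<partial>M)) + s * l1_dist M (\<lambda>x. (Pt s h x - h x) / s) (\<lambda>x. lam * h x - f x)"
proof -
  have ih: "integrable M h" using PT.gen_int g by auto
  define k where "k = (\<lambda>x. lam * h x - f x)"
  have keq: "k = (\<lambda>y. lam * h y + (-1) * f y)" by (auto simp: k_def)
  have a: "AE x in M. Pt r0 k x = lam * Pt r0 h x + (-1) * Pt r0 f x"
    unfolding keq by (rule lin_comb[OF PT.lin[OF r0] ih f(1)])
  have iP: "integrable M (Pt r0 k)" "integrable M (Pt r0 h)" "integrable M (Pt r0 f)"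
    using PT.Sint r0 ih f(1) by (auto simp: k_def)
  have "(\<integral>x. Pt r0 k x \<partial>M) = (\<integral>x. lam * Pt r0 h x + (-1) * Pt r0 f x \<partial>M)"
    by (rule integral_cong_AE) (use a iP in auto)
  also have "\<dots> = lam * (\<integral>x. Pt r0 h x \<partial>M) - (\<integral>x. Pt r0 f x \<partial>M)" using iP by simp
  finally have kk: "(\<integral>x. Pt r0 k x \<partial>M) = lam * (\<integral>x. Pt r0 h x \<partial>M) - (\<integral>x. Pt r0 f x \<partial>M)" .
  have "(\<integral>x. Pt r0 f x \<partial>M) \<le> (\<integral>x. f x \<partial>M)" by (rule Pt_int_le[OF r0 f])
  then have kb: "- (\<integral>x. Pt r0 k x \<partial>M) \<le> lam * ((\<integral>x. h x \<partial>M) - (\<integral>x. Pt r0 h x \<partial>M))"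
    using kk hint by (simp add: algebra_simps)
  have st: "\<bar>(\<integral>x. Pt r0 h x \<partial>M) - (\<integral>x. Pt (r0 + s) h x \<partial>M) + s * (\<integral>x. Pt r0 k x \<partial>M)\<bar>
      \<le> s * l1_dist M (\<lambda>x. (Pt s h x - h x) / s) k"
    using PT.step_eq[OF g[folded k_def] r0 s] .
  have "- s * (\<integral>x. Pt r0 k x \<partial>M) \<le> s * lam * ((\<integral>x. h x \<partial>M) - (\<integral>x. Pt r0 h x \<partial>M))"
    using mult_left_mono[OF kb, of s] s by (simp add: algebra_simps)
  then show ?thesis using st unfolding k_def by linarith
qed


lemma Pt_preserves:
  assumes t: "0 \<le> t" and f: "integrable M f" "AE x in M. 0 \<le> f x"
  shows "(\<integral>x. Pt t f x \<partial>M) = (\<integral>x. f x \<partial>M)"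
proof -
  define t1 where "t1 = t + 1"
  define lam where "lam = 1 / (2 * t1)"
  have t1: "1 \<le> t1" unfolding t1_def using t by simp
  have lam: "0 < lam" unfolding lam_def using t1 by simp
  have lt1: "lam * t1 = 1/2" unfolding lam_def using t1 by simp
  define h where "h = resolvent M Pt lam f"
  have g: "generator M Pt h (\<lambda>x. lam * h x - f x)" unfolding h_def by (rule PT.res_gen[OF lam f(1)])
  have ih: "integrable M h" using PT.gen_int g by auto
  have hnn: "AE x in M. 0 \<le> h x" unfolding h_def by (rule RC_props(1)[OF lam f])
  have hint: "lam * (\<integral>x. h x \<partial>M) = (\<integral>x. f x \<partial>M)" unfolding h_def by (rule RC_props(2)[OF lam f])
  define F where "F r = (\<integral>x. h x \<partial>M) - (\<integral>x. Pt r h x \<partial>M)" for r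
  have Fnn: "0 \<le> F r" if "0 \<le> r" for r using Pt_int_le[OF that ih hnn] by (simp add: F_def)
  have nh: "nrm M h = (\<integral>x. h x \<partial>M)" unfolding nrm_def
    by (rule integral_cong_AE) (use hnn ih in \<open>auto elim: eventually_mono\<close>)
  have Fbd: "F r \<le> 2 * nrm M h" if "0 \<le> r" for r
  proof -
    have "- (\<integral>x. Pt r h x \<partial>M) \<le> nrm M h"
      using abs_integral_le_nrm[of M "Pt r h"] PT.Snrm[OF that ih] by linarith
    then show ?thesis using nh by (simp add: F_def)
  qed
  have F0: "F 0 = 0"
  proof -
    have "(\<integral>x. Pt 0 h x \<partial>M) = (\<integral>x. h x \<partial>M)"
      by (rule integral_cong_AE) (use PT.S0[OF ih] PT.Sint[OF order_refl ih] ih in auto)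
    then show ?thesis by (simp add: F_def)
  qed
  define Mx where "Mx = Sup (F ` {0..t1})"
  have bdd: "bdd_above (F ` {0..t1})" using Fbd by (auto intro!: bdd_aboveI[where M = "2 * nrm M h"])
  have FM: "F r \<le> Mx" if "0 \<le> r" "r \<le> t1" for r
    unfolding Mx_def by (rule cSup_upper) (use that bdd in auto)
  have Mx0: "0 \<le> Mx" using FM[of 0] F0 t1 by simp
  have key: "F r \<le> r * lam * Mx" if r: "0 \<le> r" "r \<le> t1" for r
  proof (cases "r = 0")
    case True then show ?thesis using F0 by simp
  next
    case False
    then have rp: "0 < r" using r by simp
    show ?thesis
    proof (rule field_le_epsilon)
      fix e :: real assume e: "0 < e"
      define e' where "e' = e / r"
      have e': "0 < e'" using e rp by (simp add: e'_def)
      obtain \<eta> where \<eta>: "0 < \<eta>" "\<And>s. 0 < s \<Longrightarrow> s < \<eta> \<Longrightarrow> l1_dist M (\<lambda>x. (Pt s h x - h x) / s) (\<lambda>x. lam * h x - f x) < e'"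
        using PT.gen_lim[OF g, THEN tendstoD, OF e'] unfolding eventually_at_right_field
        by (auto simp: l1_dist_nonneg)
      obtain n :: nat where n: "r / \<eta> < real n" using reals_Archimedean2 by blast
      have "0 < r / \<eta>" using rp \<eta>(1) by simp
      then have n0: "0 < n" using n by (cases n) auto
      define s where "s = r / real n"
      have sp: "0 < s" unfolding s_def using rp n0 by simp
      have seta: "s < \<eta>" unfolding s_def using n \<eta>(1) n0 by (simp add: field_simps)
      have ns: "real n * s = r" unfolding s_def using n0 by simp
      define G where "G i = (\<integral>x. Pt (real i * s) h x \<partial>M)" for i :: nat
      have tm: "G i - G (Suc i) \<le> s * lam * Mx + s * e'" if "i < n" for i
      proof -
        have i0: "0 \<le> real i * s" using sp by simp
        have ir: "real i * s \<le> t1"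
        proof -
          have "real i * s \<le> real n * s" using that sp by (intro mult_right_mono) auto
          then show ?thesis using ns r by simp
        qed
        have eqs: "real (Suc i) * s = real i * s + s" by (simp add: algebra_simps)
        have "G i - G (Suc i) \<le> s * lam * F (real i * s) + s * l1_dist M (\<lambda>x. (Pt s h x - h x) / s) (\<lambda>x. lam * h x - f x)"
          unfolding G_def F_def eqs by (rule step_bound[OF lam f g hint i0 sp])
        also have "\<dots> \<le> s * lam * Mx + s * e'"
        proof (rule add_mono)
          show "s * lam * F (real i * s) \<le> s * lam * Mx" using FM[OF i0 ir] sp lam by simp
          show "s * l1_dist M (\<lambda>x. (Pt s h x - h x) / s) (\<lambda>x. lam * h x - f x) \<le> s * e'"
            using \<eta>(2)[OF sp seta] sp by simp
        qed
        finally show ?thesis .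
      qed
      have "F r = G 0 - G n"
      proof -
        have "G n = (\<integral>x. Pt r h x \<partial>M)" unfolding G_def ns ..
        moreover have "G 0 = (\<integral>x. h x \<partial>M)" using F0 by (simp add: G_def F_def)
        ultimately show ?thesis by (simp add: F_def)
      qed
      also have "\<dots> = (\<Sum>i<n. G i - G (Suc i))" by (rule sum_lessThan_telescope'[symmetric])
      also have "\<dots> \<le> (\<Sum>i<n. s * lam * Mx + s * e')" by (rule sum_mono) (use tm in auto)
      also have "\<dots> = real n * s * lam * Mx + real n * s * e'" by (simp add: algebra_simps)
      also have "\<dots> = r * lam * Mx + e" using ns rp by (simp add: e'_def)
      finally show "F r \<le> r * lam * Mx + e" .
    qed
  qed
  have "Mx \<le> lam * t1 * Mx"
    unfolding Mx_def
  proof (rule cSup_least)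
    show "F ` {0..t1} \<noteq> {}" using t1 by auto
    fix y assume "y \<in> F ` {0..t1}"
    then obtain r where r: "0 \<le> r" "r \<le> t1" "y = F r" by auto
    have "F r \<le> r * lam * Mx" by (rule key[OF r(1,2)])
    also have "\<dots> \<le> t1 * lam * Mx" using r lam Mx0 by (intro mult_right_mono) auto
    finally show "y \<le> lam * t1 * Sup (F ` {0..t1})" using r by (simp add: Mx_def algebra_simps)
  qed
  then have "Mx \<le> 0" using lt1 by simp
  then have Fz: "F r = 0" if "0 \<le> r" "r \<le> t1" for r using FM[OF that] Fnn[OF that(1)] by simp
  define k where "k = (\<lambda>x. lam * h x - f x)"
  have "\<bar>\<integral>x. Pt t k x \<partial>M\<bar> \<le> e" if e: "0 < e" for e
  proof -
    obtain \<eta> where \<eta>: "0 < \<eta>" "\<And>s. 0 < s \<Longrightarrow> s < \<eta> \<Longrightarrow> l1_dist M (\<lambda>x. (Pt s h x - h x) / s) k < e"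
      using PT.gen_lim[OF g, THEN tendstoD, OF e] unfolding eventually_at_right_field k_def
      by (auto simp: l1_dist_nonneg)
    define s where "s = min (\<eta> / 2) 1"
    have sp: "0 < s" "s < \<eta>" "s \<le> 1" using \<eta>(1) by (auto simp: s_def)
    have st: "\<bar>(\<integral>x. Pt t h x \<partial>M) - (\<integral>x. Pt (t + s) h x \<partial>M) + s * (\<integral>x. Pt t k x \<partial>M)\<bar>
      \<le> s * l1_dist M (\<lambda>x. (Pt s h x - h x) / s) k"
      using PT.step_eq[OF g[folded k_def] t sp(1)] .
    have "F t = 0" "F (t + s) = 0" using Fz t sp by (auto simp: t1_def)
    then have "(\<integral>x. Pt t h x \<partial>M) = (\<integral>x. Pt (t + s) h x \<partial>M)" by (simp add: F_def)
    then have "s * \<bar>\<integral>x. Pt t k x \<partial>M\<bar> \<le> s * e"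
      using st \<eta>(2)[OF sp(1,2)] sp(1) by (simp add: abs_mult)
    then show ?thesis using sp(1) by simp
  qed
  then have kz: "(\<integral>x. Pt t k x \<partial>M) = 0" by (metis abs_le_zero_iff field_le_epsilon add_0)
  have keq: "k = (\<lambda>y. lam * h y + (-1) * f y)" by (auto simp: k_def)
  have a: "AE x in M. Pt t k x = lam * Pt t h x + (-1) * Pt t f x"
    unfolding keq by (rule lin_comb[OF PT.lin[OF t] ih f(1)])
  have iP: "integrable M (Pt t k)" "integrable M (Pt t h)" "integrable M (Pt t f)"
    using PT.Sint t ih f(1) by (auto simp: k_def)
  have "(\<integral>x. Pt t k x \<partial>M) = (\<integral>x. lam * Pt t h x + (-1) * Pt t f x \<partial>M)"
    by (rule integral_cong_AE) (use a iP in auto)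
  also have "\<dots> = lam * (\<integral>x. Pt t h x \<partial>M) - (\<integral>x. Pt t f x \<partial>M)" using iP by simp
  finally have "lam * (\<integral>x. Pt t h x \<partial>M) = (\<integral>x. Pt t f x \<partial>M)" using kz by simp
  moreover have "(\<integral>x. Pt t h x \<partial>M) = (\<integral>x. h x \<partial>M)" using Fz[OF t] t by (simp add: F_def t1_def)
  ultimately show ?thesis using hint by simp
qed

end



theorem corollary3p3:
  fixes M :: "'a measure"
    and P :: "('a \<Rightarrow> real) \<Rightarrow> ('a \<Rightarrow> real)"
    and \<phi> :: "'a \<Rightarrow> real"
    and S Pt :: "real \<Rightarrow> ('a \<Rightarrow> real) \<Rightarrow> ('a \<Rightarrow> real)"
    and fstar :: "'a \<Rightarrow> real"
  assumes sf: "sigma_finite_measure M"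
    and P_stoch: "stochastic M P"
    and phi_meas: "\<phi> \<in> borel_measurable M"
    and phi_nonneg: "\<And>x. 0 \<le> \<phi> x"
    and S_semi: "substochastic_semigroup M S"
    and dom_A: "\<And>f g. generator M S f g \<Longrightarrow> integrable M (\<lambda>x. \<phi> x * \<bar>f x\<bar>)"
    and int_A: "\<And>f g. generator M S f g \<Longrightarrow> (AE x in M. 0 \<le> f x) \<Longrightarrow>
                  (\<integral>x. g x \<partial>M) = - (\<integral>x. \<phi> x * f x \<partial>M)"
    and Pt_semi: "substochastic_semigroup M Pt"
    and Pt_res: "\<And>l f. 0 < l \<Longrightarrow> l1 M f \<Longrightarrow>
        ((\<lambda>n. l1_dist M
            (resolvent M S l (\<lambda>x. \<Sum>k\<le>n. ((PphiR M P \<phi> S l) ^^ k) f x))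
            (resolvent M Pt l f)) \<longlonglongrightarrow> 0)"
    and fstar_dens: "is_density M fstar"
    and fstar_pos: "AE x in M. 0 < fstar x"
    and K_subinv: "\<exists>g. l1 M g \<and>
        ((\<lambda>l. l1_dist M (PphiR M P \<phi> S l fstar) g) \<longlongrightarrow> 0) (at_right 0) \<and>
        (AE x in M. g x \<le> fstar x)"
  shows "stochastic_semigroup M Pt \<and>
         (AE x in M. 0 < (SUP n::nat. ereal (resolvent M S (1 / real (Suc n)) fstar x)))"
proof -
  interpret mainP M P \<phi> S fstar Pt
    by unfold_locales (fact P_stoch phi_meas phi_nonneg S_semi dom_A int_A fstar_dens fstar_pos
        K_subinv Pt_semi Pt_res)+
  have st: "stochastic M (Pt t)" if t: "0 \<le> t" for t
    unfolding stochastic_def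
  proof (intro conjI allI impI)
    show "l1_linear M (Pt t)" using PT.lin[OF t] .
    fix f assume d: "is_density M f"
    then have f: "integrable M f" "AE x in M. 0 \<le> f x" "(\<integral>x. f x \<partial>M) = 1"
      by (auto simp: is_density_def l1_def)
    show "is_density M (Pt t f)"
      unfolding is_density_def l1_def
      using PT.Sint[OF t f(1)] Pt_pos[OF t f(1,2)] Pt_preserves[OF t f(1,2)] f(3) by simp
  qed
  have sts: "stochastic_semigroup M Pt"
    unfolding stochastic_semigroup_def using PT.c0 st by blast
  define h where "h = resolvent M S 1 fstar"
  have g: "generator M S h (\<lambda>x. 1 * h x - fstar x)" unfolding h_def
    using res_gen[OF zero_less_one fs_int] by simp
  have hp: "AE x in M. 0 \<le> h x" unfolding h_def by (rule res_pos[OF zero_less_one fs_int fs_nn])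
  have "AE x in M. 0 < h x" by (rule gen_strict[OF zero_less_one fs_int fstar_pos g hp])
  then have "AE x in M. 0 < (SUP n::nat. ereal (resolvent M S (1 / real (Suc n)) fstar x))"
  proof eventually_elim
    case (elim x)
    have "ereal (resolvent M S (1 / real (Suc 0)) fstar x) \<le> (SUP n::nat. ereal (resolvent M S (1 / real (Suc n)) fstar x))"
      by (rule SUP_upper) simp
    moreover have "0 < ereal (resolvent M S (1 / real (Suc 0)) fstar x)" using elim by (simp add: h_def)
    ultimately show ?case by (rule less_le_trans[rotated])
  qed
  with sts show ?thesis by blast
qed

end
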